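(* Let $n$ be a positive integer, $0\le m\le\lfloor n/2\rfloor$ and $0\le k\le m$. Let $M^{(n-m,m)}$ be the complex vector space with basis $\{e_\sigma\}$ indexed by the $m$-element subsets $\sigma$ of $\{1,\dots,n\}$, let $b_0,\dots,b_m$ be complex numbers and let $B=B_{(n-m,m)}$ be the matrix (in the basis $\{e_\sigma\}$) whose $(\sigma,\tau)$ entry is $b_{\#(\sigma\cap\tau)}$. Let $\Omega=\{n-m+1,\dots,n\}$ and define the linear map $\pi:\mathbb{C}[S_n]\to M^{(n-m,m)}$ by $\pi(g)=e_{g(\Omega)}$ for $g\in S_n$. Let $T_k$ be the Young tableau of shape $(n-k,k)$ whose first row contains $1,\dots,n-k$ and whose second row contains $n-k+1,\dots,n$, with row subgroup $R(T_k)$ and column subgroup $C(T_k)$, and let $c_k=\big(\sum_{q\in C(T_k)}\operatorname{sgn}(q)q\big)\big(\sum_{p\in R(T_k)}p\big)\in\mathbb{C}[S_n]$. Then $\pi(c_k)$ is an eigenvector of $B$ with eigenvalue $$\lambda_k=\sum_{j=0}^{k}\sum_{p=0}^{m-k}(-1)^{k-j}\binom{k}{j}\binom{m-j}{p}\binom{n-m-k+j}{m-k-p}\,b_{j+p},$$ and, for generic $b_0,\dots,b_m$, the multiplicity of $\lambda_k$ as an eigenvalue of $B$ is $$f^{(n-k,k)}=\frac{n!\,(n-2k+1)}{k!\,(n-k+1)!}.$$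
   Context: $\#X$ denotes the cardinality of a finite set $X$. The row subgroup $R(T_k)$ (resp. column subgroup $C(T_k)$) consists of the permutations of $\{1,\dots,n\}$ preserving each row (resp. each column) of $T_k$ as a set. Products in the group ring are composition of permutations, $qp=q\circ p$. *)

theory Defs
  imports "Jordan_Normal_Form.Char_Poly" "HOL-Combinatorics.Permutations"
begin

definition msubsets :: "nat \<Rightarrow> nat \<Rightarrow> nat set set" where
  "msubsets n m = {\<sigma>. \<sigma> \<subseteq> {1..n} \<and> card \<sigma> = m}"

text \<open>Action of B on a vector v = sum_tau v(tau) e_tau, given as coordinate function.\<close>
definition Bop :: "nat \<Rightarrow> nat \<Rightarrow> (nat \<Rightarrow> complex) \<Rightarrow> (nat set \<Rightarrow> complex) \<Rightarrow> (nat set \<Rightarrow> complex)" where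
  "Bop n m b v = (\<lambda>\<sigma>. \<Sum>\<tau>\<in>msubsets n m. b (card (\<sigma> \<inter> \<tau>)) * v \<tau>)"

definition subset_list :: "nat \<Rightarrow> nat \<Rightarrow> nat set list" where
  "subset_list n m = (SOME xs. distinct xs \<and> set xs = msubsets n m)"

definition Bmat :: "nat \<Rightarrow> nat \<Rightarrow> (nat \<Rightarrow> complex) \<Rightarrow> complex mat" where
  "Bmat n m b = mat (length (subset_list n m)) (length (subset_list n m))
     (\<lambda>(i, j). b (card (subset_list n m ! i \<inter> subset_list n m ! j)))"

definition eig_mult :: "complex mat \<Rightarrow> complex \<Rightarrow> nat" where
  "eig_mult A x = order x (char_poly A)"

definition tab_rows :: "nat \<Rightarrow> nat \<Rightarrow> nat set set" where
  "tab_rows n k = {{1..n-k}, {n-k+1..n}}"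

definition tab_cols :: "nat \<Rightarrow> nat \<Rightarrow> nat set set" where
  "tab_cols n k = (\<lambda>j. if j \<le> k then {j, n - k + j} else {j}) ` {1..n-k}"

definition row_group :: "nat \<Rightarrow> nat \<Rightarrow> (nat \<Rightarrow> nat) set" where
  "row_group n k = {p. p permutes {1..n} \<and> (\<forall>r\<in>tab_rows n k. p ` r = r)}"

definition col_group :: "nat \<Rightarrow> nat \<Rightarrow> (nat \<Rightarrow> nat) set" where
  "col_group n k = {q. q permutes {1..n} \<and> (\<forall>c\<in>tab_cols n k. q ` c = c)}"

text \<open>pi(c_k), where c_k = (sum_q sgn(q) q)(sum_p p) = sum_q sum_p sgn(q) (q o p),
  and pi(g) = e_{g(Omega)}, Omega = {n-m+1..n}; given as coordinate function.\<close>
definition pi_ck :: "nat \<Rightarrow> nat \<Rightarrow> nat \<Rightarrow> nat set \<Rightarrow> complex" where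
  "pi_ck n m k = (\<lambda>\<sigma>. \<Sum>q\<in>col_group n k. \<Sum>p\<in>row_group n k.
       of_int (sign q) * (if (q \<circ> p) ` {n-m+1..n} = \<sigma> then 1 else 0))"

definition lam :: "nat \<Rightarrow> nat \<Rightarrow> nat \<Rightarrow> (nat \<Rightarrow> complex) \<Rightarrow> complex" where
  "lam n m k b = (\<Sum>j=0..k. \<Sum>p=0..m-k. (-1) ^ (k - j) * of_nat (k choose j)
      * of_nat ((m - j) choose p) * of_nat ((n - m - k + j) choose (m - k - p)) * b (j + p))"

text \<open>Polynomial functions of the parameters b_0,...,b_m (used for "generic").\<close>
inductive_set polyfun :: "nat \<Rightarrow> ((nat \<Rightarrow> complex) \<Rightarrow> complex) set" for m where
  pconst: "(\<lambda>b. c) \<in> polyfun m"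
| pvar: "i \<le> m \<Longrightarrow> (\<lambda>b. b i) \<in> polyfun m"
| padd: "P \<in> polyfun m \<Longrightarrow> Q \<in> polyfun m \<Longrightarrow> (\<lambda>b. P b + Q b) \<in> polyfun m"
| pmult: "P \<in> polyfun m \<Longrightarrow> Q \<in> polyfun m \<Longrightarrow> (\<lambda>b. P b * Q b) \<in> polyfun m"

end

theory Submission
  imports Defs "Jordan_Normal_Form.Jordan_Normal_Form_Uniqueness" "Jordan_Normal_Form.Jordan_Normal_Form_Existence"
begin


lemma finite_msubsets[simp]: "finite (msubsets n r)"
  unfolding msubsets_def by (rule finite_subset[of _ "Pow {1..n}"]) auto

lemma card_msubsets: "card (msubsets n r) = n choose r"
  unfolding msubsets_def using n_subsets[of "{1..n}" r] by simp

lemma msubsets_iff: "\<sigma> \<in> msubsets n r \<longleftrightarrow> \<sigma> \<subseteq> {1..n} \<and> card \<sigma> = r"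
  unfolding msubsets_def by simp

lemma card_split_count:
  assumes fX: "finite X" and fY: "finite Y" and fr: "finite \<rho>"
    and d: "X \<inter> Y = {}" "\<rho> \<inter> X = {}" "\<rho> \<inter> Y = {}"
  shows "card {\<tau>. \<rho> \<subseteq> \<tau> \<and> \<tau> \<subseteq> \<rho> \<union> X \<union> Y \<and> card (\<tau> \<inter> X) = p \<and> card (\<tau> \<inter> Y) = q}
     = (card X choose p) * (card Y choose q)"
proof -
  let ?A = "{P. P \<subseteq> X \<and> card P = p}" and ?B = "{Q. Q \<subseteq> Y \<and> card Q = q}"
  let ?f = "\<lambda>(P,Q). \<rho> \<union> P \<union> Q"
  have eq: "{\<tau>. \<rho> \<subseteq> \<tau> \<and> \<tau> \<subseteq> \<rho> \<union> X \<union> Y \<and> card (\<tau> \<inter> X) = p \<and> card (\<tau> \<inter> Y) = q} = ?f ` (?A \<times> ?B)"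
  proof (intro equalityI subsetI)
    fix \<tau> assume "\<tau> \<in> {\<tau>. \<rho> \<subseteq> \<tau> \<and> \<tau> \<subseteq> \<rho> \<union> X \<union> Y \<and> card (\<tau> \<inter> X) = p \<and> card (\<tau> \<inter> Y) = q}"
    hence t: "\<rho> \<subseteq> \<tau>" "\<tau> \<subseteq> \<rho> \<union> X \<union> Y" "card (\<tau> \<inter> X) = p" "card (\<tau> \<inter> Y) = q" by auto
    have "\<tau> = ?f (\<tau> \<inter> X, \<tau> \<inter> Y)" using t by auto
    moreover have "(\<tau> \<inter> X, \<tau> \<inter> Y) \<in> ?A \<times> ?B" using t by auto
    ultimately show "\<tau> \<in> ?f ` (?A \<times> ?B)" by blast
  next
    fix \<tau> assume "\<tau> \<in> ?f ` (?A \<times> ?B)"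
    then obtain P Q where PQ: "P \<subseteq> X" "card P = p" "Q \<subseteq> Y" "card Q = q" and t: "\<tau> = \<rho> \<union> P \<union> Q" by auto
    have "\<tau> \<inter> X = P" using PQ t d by auto
    moreover have "\<tau> \<inter> Y = Q" using PQ t d by auto
    ultimately show "\<tau> \<in> {\<tau>. \<rho> \<subseteq> \<tau> \<and> \<tau> \<subseteq> \<rho> \<union> X \<union> Y \<and> card (\<tau> \<inter> X) = p \<and> card (\<tau> \<inter> Y) = q}"
      using PQ t by auto
  qed
  have inj: "inj_on ?f (?A \<times> ?B)"
  proof (rule inj_onI, clarify)
    fix P Q P' Q' assume a: "P \<subseteq> X" "Q \<subseteq> Y" "P' \<subseteq> X" "Q' \<subseteq> Y" "\<rho> \<union> P \<union> Q = \<rho> \<union> P' \<union> Q'"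
    have hX: "\<And>P Q. P \<subseteq> X \<Longrightarrow> Q \<subseteq> Y \<Longrightarrow> (\<rho> \<union> P \<union> Q) \<inter> X = P" using d by blast
    have hY: "\<And>P Q. P \<subseteq> X \<Longrightarrow> Q \<subseteq> Y \<Longrightarrow> (\<rho> \<union> P \<union> Q) \<inter> Y = Q" using d by blast
    show "P = P' \<and> Q = Q'" using hX[OF a(1,2)] hX[OF a(3,4)] hY[OF a(1,2)] hY[OF a(3,4)] a(5) by metis
  qed
  show ?thesis unfolding eq card_image[OF inj] card_cartesian_product
    using n_subsets[OF fX, of p] n_subsets[OF fY, of q] by simp
qed

lemma sum_swap_count:
  assumes "finite A" "finite B"
  shows "(\<Sum>x\<in>A. sum f {y\<in>B. P x y}) = (\<Sum>y\<in>B. of_nat (card {x\<in>A. P x y}) * (f y :: 'a :: comm_semiring_1))"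
proof -
  have "(\<Sum>x\<in>A. sum f {y\<in>B. P x y}) = (\<Sum>x\<in>A. \<Sum>y\<in>B. if P x y then f y else 0)"
    using assms by (simp add: sum.inter_filter)
  also have "\<dots> = (\<Sum>y\<in>B. \<Sum>x\<in>A. if P x y then f y else 0)" by (rule sum.swap)
  also have "\<dots> = (\<Sum>y\<in>B. of_nat (card {x\<in>A. P x y}) * f y)"
  proof (rule sum.cong[OF refl])
    fix y
    have "(\<Sum>x\<in>A. if P x y then f y else 0) = sum (\<lambda>_. f y) {x\<in>A. P x y}"
      using assms(1) by (rule sum.inter_filter[symmetric])
    also have "\<dots> = of_nat (card {x\<in>A. P x y}) * f y" by simp
    finally show "(\<Sum>x\<in>A. if P x y then f y else 0) = of_nat (card {x\<in>A. P x y}) * f y" .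
  qed
  finally show ?thesis .
qed

definition Wop :: "nat \<Rightarrow> nat \<Rightarrow> (nat set \<Rightarrow> complex) \<Rightarrow> nat set \<Rightarrow> complex" where
  "Wop n k w \<sigma> = sum w {\<rho> \<in> msubsets n k. \<rho> \<subseteq> \<sigma>}"

definition KD :: "nat \<Rightarrow> nat \<Rightarrow> (nat set \<Rightarrow> complex) \<Rightarrow> bool" where
  "KD n k w = (\<forall>\<rho>'\<in>msubsets n (k-1). 0 < k \<longrightarrow> sum w {\<rho> \<in> msubsets n k. \<rho>' \<subseteq> \<rho>} = 0)"

definition Ncnt :: "nat \<Rightarrow> nat \<Rightarrow> (nat set \<Rightarrow> complex) \<Rightarrow> nat set \<Rightarrow> nat \<Rightarrow> complex" where
  "Ncnt n k w \<sigma> i = sum w {\<rho> \<in> msubsets n k. card (\<rho> \<inter> \<sigma>) = i}"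

lemma count_down:
  assumes r: "\<rho> \<in> msubsets n k" and k: "0 < k"
  shows "card {\<rho>'\<in>msubsets n (k-1). card (\<rho>' \<inter> \<sigma>) = i \<and> \<rho>' \<subseteq> \<rho>}
    = (if card (\<rho> \<inter> \<sigma>) = i+1 then i+1 else if card (\<rho> \<inter> \<sigma>) = i then k - i else 0)"
proof -
  have rs: "\<rho> \<subseteq> {1..n}" and rc: "card \<rho> = k" using r by (auto simp: msubsets_iff)
  have fr: "finite \<rho>" using rs finite_subset by blast
  let ?E = "{x\<in>\<rho>. card ((\<rho> - {x}) \<inter> \<sigma>) = i}"
  have eq: "{\<rho>'\<in>msubsets n (k-1). card (\<rho>' \<inter> \<sigma>) = i \<and> \<rho>' \<subseteq> \<rho>} = (\<lambda>x. \<rho> - {x}) ` ?E"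
  proof (intro equalityI subsetI)
    fix \<rho>' assume "\<rho>' \<in> {\<rho>'\<in>msubsets n (k-1). card (\<rho>' \<inter> \<sigma>) = i \<and> \<rho>' \<subseteq> \<rho>}"
    hence a: "\<rho>' \<subseteq> \<rho>" "card \<rho>' = k - 1" "card (\<rho>' \<inter> \<sigma>) = i" by (auto simp: msubsets_iff)
    have fr': "finite \<rho>'" using a(1) fr finite_subset by blast
    have "card (\<rho> - \<rho>') = card \<rho> - card \<rho>'" by (rule card_Diff_subset[OF fr' a(1)])
    hence "card (\<rho> - \<rho>') = 1" using a(2) rc k by simp
    then obtain x where x: "\<rho> - \<rho>' = {x}" by (auto simp: card_Suc_eq)
    have "\<rho>' = \<rho> - {x}" using x a(1) by blast
    moreover have "x \<in> \<rho>" using x by blast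
    ultimately show "\<rho>' \<in> (\<lambda>x. \<rho> - {x}) ` ?E" using a(3) by blast
  next
    fix \<rho>' assume "\<rho>' \<in> (\<lambda>x. \<rho> - {x}) ` ?E"
    then obtain x where x: "x \<in> \<rho>" "card ((\<rho> - {x}) \<inter> \<sigma>) = i" and e: "\<rho>' = \<rho> - {x}" by blast
    have "card \<rho>' = k - 1" using e x(1) rc fr by simp
    moreover have "\<rho>' \<subseteq> {1..n}" "\<rho>' \<subseteq> \<rho>" using e rs by blast+
    ultimately show "\<rho>' \<in> {\<rho>'\<in>msubsets n (k-1). card (\<rho>' \<inter> \<sigma>) = i \<and> \<rho>' \<subseteq> \<rho>}"
      using e x(2) by (simp add: msubsets_iff)
  qed
  have inj: "inj_on (\<lambda>x. \<rho> - {x}) ?E" by (rule inj_onI) blast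
  have fi: "finite (\<rho> \<inter> \<sigma>)" using fr by blast
  have c: "card ((\<rho> - {x}) \<inter> \<sigma>) = card (\<rho> \<inter> \<sigma>) - (if x \<in> \<sigma> then 1 else 0)" if "x \<in> \<rho>" for x
  proof -
    have "(\<rho> - {x}) \<inter> \<sigma> = (\<rho> \<inter> \<sigma>) - {x}" by blast
    moreover have "card ((\<rho> \<inter> \<sigma>) - {x}) = card (\<rho> \<inter> \<sigma>) - (if x \<in> \<sigma> then 1 else 0)"
      using fi that by (simp add: card_Diff_singleton_if)
    ultimately show ?thesis by simp
  qed
  have pos: "0 < card (\<rho> \<inter> \<sigma>)" if "x \<in> \<rho>" "x \<in> \<sigma>" for x
    using fi that card_gt_0_iff by blast
  have E: "?E = (if card (\<rho> \<inter> \<sigma>) = i+1 then \<rho> \<inter> \<sigma> else if card (\<rho> \<inter> \<sigma>) = i then \<rho> - \<sigma> else {})"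
  proof (cases "card (\<rho> \<inter> \<sigma>) = i+1")
    case True
    have "?E = \<rho> \<inter> \<sigma>"
    proof (intro equalityI subsetI)
      fix x assume "x \<in> ?E"
      hence "x \<in> \<rho>" "card ((\<rho> - {x}) \<inter> \<sigma>) = i" by auto
      thus "x \<in> \<rho> \<inter> \<sigma>" using c[of x] True by (cases "x \<in> \<sigma>") auto
    next
      fix x assume "x \<in> \<rho> \<inter> \<sigma>"
      thus "x \<in> ?E" using c[of x] True by auto
    qed
    thus ?thesis using True by simp
  next
    case F1: False
    show ?thesis
    proof (cases "card (\<rho> \<inter> \<sigma>) = i")
      case True
      have "?E = \<rho> - \<sigma>"
      proof (intro equalityI subsetI)
        fix x assume "x \<in> ?E"
        hence "x \<in> \<rho>" "card ((\<rho> - {x}) \<inter> \<sigma>) = i" by auto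
        thus "x \<in> \<rho> - \<sigma>" using c[of x] pos[of x] True by (cases "x \<in> \<sigma>") auto
      next
        fix x assume "x \<in> \<rho> - \<sigma>"
        thus "x \<in> ?E" using c[of x] True by auto
      qed
      thus ?thesis using True F1 by simp
    next
      case False
      have "?E = {}"
      proof (intro equalityI subsetI)
        fix x assume "x \<in> ?E"
        hence "x \<in> \<rho>" "card ((\<rho> - {x}) \<inter> \<sigma>) = i" by auto
        thus "x \<in> {}" using c[of x] pos[of x] False F1 by (cases "x \<in> \<sigma>") auto
      qed blast
      thus ?thesis using False F1 by simp
    qed
  qed
  have cd: "card (\<rho> - \<sigma>) = k - card (\<rho> \<inter> \<sigma>)"
    using card_Diff_subset_Int[of "\<rho> \<inter> \<sigma>" \<rho>] fi rc
    by (metis Diff_Int2 Int_absorb card_Diff_subset_Int finite_Int inf_commute)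
  have ci: "card ((\<lambda>x. \<rho> - {x}) ` ?E) = card ?E" by (rule card_image[OF inj])
  show ?thesis unfolding eq ci by (subst E) (use cd in simp)
qed

lemma Ncnt_rec:
  assumes kd: "KD n k w" and k: "0 < k" and i: "i < k"
  shows "of_nat (i+1) * Ncnt n k w \<sigma> (i+1) + of_nat (k-i) * Ncnt n k w \<sigma> i = 0"
proof -
  let ?A = "{\<rho>'\<in>msubsets n (k-1). card (\<rho>' \<inter> \<sigma>) = i}"
  have "0 = (\<Sum>\<rho>'\<in>?A. sum w {\<rho> \<in> msubsets n k. \<rho>' \<subseteq> \<rho>})"
    using kd k unfolding KD_def by (intro sum.neutral[symmetric]) auto
  also have "\<dots> = (\<Sum>\<rho>\<in>msubsets n k. of_nat (card {\<rho>'\<in>?A. \<rho>' \<subseteq> \<rho>}) * w \<rho>)"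
    by (rule sum_swap_count) auto
  also have "\<dots> = (\<Sum>\<rho>\<in>msubsets n k. (if card (\<rho> \<inter> \<sigma>) = i+1 then of_nat (i+1) * w \<rho> else 0)
         + (if card (\<rho> \<inter> \<sigma>) = i then of_nat (k-i) * w \<rho> else 0))"
  proof (rule sum.cong[OF refl])
    fix \<rho> assume r: "\<rho> \<in> msubsets n k"
    have "{\<rho>'\<in>?A. \<rho>' \<subseteq> \<rho>} = {\<rho>'\<in>msubsets n (k-1). card (\<rho>' \<inter> \<sigma>) = i \<and> \<rho>' \<subseteq> \<rho>}" by auto
    thus "of_nat (card {\<rho>'\<in>?A. \<rho>' \<subseteq> \<rho>}) * w \<rho> = (if card (\<rho> \<inter> \<sigma>) = i+1 then of_nat (i+1) * w \<rho> else 0)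
         + (if card (\<rho> \<inter> \<sigma>) = i then of_nat (k-i) * w \<rho> else 0)"
      using count_down[OF r k, of \<sigma> i] by auto
  qed
  also have "\<dots> = of_nat (i+1) * Ncnt n k w \<sigma> (i+1) + of_nat (k-i) * Ncnt n k w \<sigma> i"
    unfolding sum.distrib Ncnt_def
    by (simp add: sum.inter_filter sum_distrib_left if_distrib cong: if_cong)
  finally show ?thesis by simp
qed

lemma Ncnt_closed:
  assumes kd: "KD n k w" and i: "i \<le> k"
  shows "Ncnt n k w \<sigma> i = (-1) ^ (k - i) * of_nat (k choose i) * Ncnt n k w \<sigma> k"
  using i
proof (induction "k - i" arbitrary: i)
  case 0
  hence "i = k" by simp
  thus ?case by simp
next
  case (Suc d)
  hence ik: "i < k" and d: "d = k - (i+1)" by auto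
  have IH: "Ncnt n k w \<sigma> (i+1) = (-1) ^ (k - (i+1)) * of_nat (k choose (i+1)) * Ncnt n k w \<sigma> k"
    using Suc.hyps(1)[OF d] ik by simp
  have rec: "of_nat (i+1) * Ncnt n k w \<sigma> (i+1) + of_nat (k-i) * Ncnt n k w \<sigma> i = 0"
    using Ncnt_rec[OF kd _ ik] ik by simp
  have bin: "(i+1) * (k choose (i+1)) = (k - i) * (k choose i)"
    using binomial_absorption[of i k] binomial_absorb_comp[of k i] by simp
  have kz: "(of_nat (k - i) :: complex) \<noteq> 0" using ik by simp
  have ex: "k - i = Suc (k - (i+1))" using ik by simp
  have "of_nat (k-i) * Ncnt n k w \<sigma> i = - (of_nat (i+1) * Ncnt n k w \<sigma> (i+1))"
    using rec by (simp add: eq_neg_iff_add_eq_0 add.commute)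
  also have "\<dots> = - ((-1) ^ (k - (i+1)) * of_nat ((i+1) * (k choose (i+1))) * Ncnt n k w \<sigma> k)"
    unfolding IH by (simp add: algebra_simps)
  also have "\<dots> = of_nat (k-i) * ((-1) ^ (k - i) * of_nat (k choose i) * Ncnt n k w \<sigma> k)"
  proof -
    have pm: "(-1 :: complex) ^ (k - i) = - ((-1) ^ (k - (i+1)))" unfolding ex by simp
    show ?thesis unfolding bin pm of_nat_mult by (simp add: algebra_simps)
  qed
  finally show ?case using kz by simp
qed


lemma tau_decomp:
  assumes r: "\<rho> \<in> msubsets n k" and s: "\<sigma> \<in> msubsets n m" and t: "\<tau> \<subseteq> {1..n}" "\<rho> \<subseteq> \<tau>"
  shows "card \<tau> = k + card (\<tau> \<inter> (\<sigma> - \<rho>)) + card (\<tau> \<inter> ({1..n} - (\<sigma> \<union> \<rho>)))"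
    "card (\<sigma> \<inter> \<tau>) = card (\<sigma> \<inter> \<rho>) + card (\<tau> \<inter> (\<sigma> - \<rho>))"
proof -
  have rs: "\<rho> \<subseteq> {1..n}" "card \<rho> = k" using r by (auto simp: msubsets_iff)
  have ss: "\<sigma> \<subseteq> {1..n}" using s by (auto simp: msubsets_iff)
  have ft: "finite \<tau>" using t(1) finite_subset by blast
  have fr: "finite \<rho>" using rs(1) finite_subset by blast
  have f2: "finite (\<tau> \<inter> (\<sigma> - \<rho>))" "finite (\<tau> \<inter> ({1..n} - (\<sigma> \<union> \<rho>)))" using ft by auto
  have e: "\<tau> = (\<rho> \<union> (\<tau> \<inter> (\<sigma> - \<rho>))) \<union> (\<tau> \<inter> ({1..n} - (\<sigma> \<union> \<rho>)))" using t by blast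
  have d1: "(\<rho> \<union> (\<tau> \<inter> (\<sigma> - \<rho>))) \<inter> (\<tau> \<inter> ({1..n} - (\<sigma> \<union> \<rho>))) = {}" by blast
  have d2: "\<rho> \<inter> (\<tau> \<inter> (\<sigma> - \<rho>)) = {}" by blast
  have "card \<tau> = card ((\<rho> \<union> (\<tau> \<inter> (\<sigma> - \<rho>))) \<union> (\<tau> \<inter> ({1..n} - (\<sigma> \<union> \<rho>))))"
    using e by (rule arg_cong)
  also have "\<dots> = card (\<rho> \<union> (\<tau> \<inter> (\<sigma> - \<rho>))) + card (\<tau> \<inter> ({1..n} - (\<sigma> \<union> \<rho>)))"
    by (rule card_Un_disjoint) (use fr f2 d1 in auto)
  also have "card (\<rho> \<union> (\<tau> \<inter> (\<sigma> - \<rho>))) = card \<rho> + card (\<tau> \<inter> (\<sigma> - \<rho>))"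
    by (rule card_Un_disjoint) (use fr f2 d2 in auto)
  finally show "card \<tau> = k + card (\<tau> \<inter> (\<sigma> - \<rho>)) + card (\<tau> \<inter> ({1..n} - (\<sigma> \<union> \<rho>)))" using rs by simp
  have e2: "\<sigma> \<inter> \<tau> = (\<sigma> \<inter> \<rho>) \<union> (\<tau> \<inter> (\<sigma> - \<rho>))" using t by blast
  have d3: "(\<sigma> \<inter> \<rho>) \<inter> (\<tau> \<inter> (\<sigma> - \<rho>)) = {}" by blast
  have "card (\<sigma> \<inter> \<tau>) = card ((\<sigma> \<inter> \<rho>) \<union> (\<tau> \<inter> (\<sigma> - \<rho>)))" using e2 by (rule arg_cong)
  also have "\<dots> = card (\<sigma> \<inter> \<rho>) + card (\<tau> \<inter> (\<sigma> - \<rho>))"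
    by (rule card_Un_disjoint) (use fr f2 d3 in auto)
  finally show "card (\<sigma> \<inter> \<tau>) = card (\<sigma> \<inter> \<rho>) + card (\<tau> \<inter> (\<sigma> - \<rho>))" .
qed

lemma count_tau:
  assumes r: "\<rho> \<in> msubsets n k" and s: "\<sigma> \<in> msubsets n m" and km: "k \<le> m" "m + k \<le> n"
    and p: "p \<le> m - k"
  shows "card {\<tau>\<in>msubsets n m. \<rho> \<subseteq> \<tau> \<and> card (\<sigma> \<inter> \<tau>) = card (\<sigma> \<inter> \<rho>) + p}
     = (m - card (\<sigma> \<inter> \<rho>) choose p) * (n - m - k + card (\<sigma> \<inter> \<rho>) choose (m - k - p))"
proof -
  have rs: "\<rho> \<subseteq> {1..n}" "card \<rho> = k" using r by (auto simp: msubsets_iff)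
  have ss: "\<sigma> \<subseteq> {1..n}" "card \<sigma> = m" using s by (auto simp: msubsets_iff)
  define X where "X = \<sigma> - \<rho>"
  define Y where "Y = {1..n} - (\<sigma> \<union> \<rho>)"
  have fr: "finite \<rho>" "finite \<sigma>" using rs ss finite_subset by auto
  have fX: "finite X" unfolding X_def using fr by auto
  have fY: "finite Y" unfolding Y_def by auto
  have eq: "{\<tau>\<in>msubsets n m. \<rho> \<subseteq> \<tau> \<and> card (\<sigma> \<inter> \<tau>) = card (\<sigma> \<inter> \<rho>) + p}
    = {\<tau>. \<rho> \<subseteq> \<tau> \<and> \<tau> \<subseteq> \<rho> \<union> X \<union> Y \<and> card (\<tau> \<inter> X) = p \<and> card (\<tau> \<inter> Y) = m - k - p}"
  proof (intro equalityI subsetI)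
    fix \<tau> assume "\<tau> \<in> {\<tau>\<in>msubsets n m. \<rho> \<subseteq> \<tau> \<and> card (\<sigma> \<inter> \<tau>) = card (\<sigma> \<inter> \<rho>) + p}"
    hence t: "\<tau> \<subseteq> {1..n}" "card \<tau> = m" "\<rho> \<subseteq> \<tau>" "card (\<sigma> \<inter> \<tau>) = card (\<sigma> \<inter> \<rho>) + p"
      by (auto simp: msubsets_iff)
    note d = tau_decomp[OF r s t(1,3), folded X_def Y_def]
    have "\<tau> \<subseteq> \<rho> \<union> X \<union> Y" unfolding X_def Y_def using t(1) by blast
    thus "\<tau> \<in> {\<tau>. \<rho> \<subseteq> \<tau> \<and> \<tau> \<subseteq> \<rho> \<union> X \<union> Y \<and> card (\<tau> \<inter> X) = p \<and> card (\<tau> \<inter> Y) = m - k - p}"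
      using d t by auto
  next
    fix \<tau> assume "\<tau> \<in> {\<tau>. \<rho> \<subseteq> \<tau> \<and> \<tau> \<subseteq> \<rho> \<union> X \<union> Y \<and> card (\<tau> \<inter> X) = p \<and> card (\<tau> \<inter> Y) = m - k - p}"
    hence t: "\<rho> \<subseteq> \<tau>" "\<tau> \<subseteq> \<rho> \<union> X \<union> Y" "card (\<tau> \<inter> X) = p" "card (\<tau> \<inter> Y) = m - k - p" by auto
    have t1: "\<tau> \<subseteq> {1..n}" using t(2) rs ss unfolding X_def Y_def by blast
    note d = tau_decomp[OF r s t1 t(1), folded X_def Y_def]
    show "\<tau> \<in> {\<tau>\<in>msubsets n m. \<rho> \<subseteq> \<tau> \<and> card (\<sigma> \<inter> \<tau>) = card (\<sigma> \<inter> \<rho>) + p}"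
      using d t t1 p km by (auto simp: msubsets_iff)
  qed
  have cX: "card X = m - card (\<sigma> \<inter> \<rho>)" unfolding X_def using fr ss
    by (simp add: card_Diff_subset_Int Diff_Int2 Int_commute)
  have cU: "card (\<sigma> \<union> \<rho>) = m + k - card (\<sigma> \<inter> \<rho>)"
    using card_Un_Int[OF fr(2) fr(1)] ss rs by simp
  have cY: "card Y = n - m - k + card (\<sigma> \<inter> \<rho>)"
  proof -
    have "card Y = n - card (\<sigma> \<union> \<rho>)" unfolding Y_def using rs ss
      by (subst card_Diff_subset) (auto intro: finite_subset)
    moreover have "card (\<sigma> \<inter> \<rho>) \<le> k" using rs fr by (metis card_mono inf_le2)
    ultimately show ?thesis using cU km by simp
  qed
  have dj: "X \<inter> Y = {}" "\<rho> \<inter> X = {}" "\<rho> \<inter> Y = {}" unfolding X_def Y_def by blast+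
  show ?thesis unfolding eq card_split_count[OF fX fY fr(1) dj] cX cY ..
qed

definition Gf :: "nat \<Rightarrow> nat \<Rightarrow> nat \<Rightarrow> (nat \<Rightarrow> complex) \<Rightarrow> nat \<Rightarrow> complex" where
  "Gf n m k b j = (\<Sum>p=0..m-k. of_nat ((m - j) choose p) * of_nat ((n - m - k + j) choose (m - k - p)) * b (j + p))"

lemma inner_sum:
  assumes r: "\<rho> \<in> msubsets n k" and s: "\<sigma> \<in> msubsets n m" and km: "k \<le> m" "m + k \<le> n"
  shows "(\<Sum>\<tau>\<in>{\<tau>\<in>msubsets n m. \<rho> \<subseteq> \<tau>}. b (card (\<sigma> \<inter> \<tau>))) = Gf n m k b (card (\<sigma> \<inter> \<rho>))"
proof -
  let ?j = "card (\<sigma> \<inter> \<rho>)"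
  let ?T = "{\<tau>\<in>msubsets n m. \<rho> \<subseteq> \<tau>}"
  let ?g = "\<lambda>\<tau>. card (\<sigma> \<inter> \<tau>) - ?j"
  have dec: "\<And>\<tau>. \<tau> \<in> ?T \<Longrightarrow> card (\<sigma> \<inter> \<tau>) = ?j + ?g \<tau> \<and> ?g \<tau> \<le> m - k"
  proof -
    fix \<tau> assume "\<tau> \<in> ?T"
    hence t: "\<tau> \<subseteq> {1..n}" "card \<tau> = m" "\<rho> \<subseteq> \<tau>" by (auto simp: msubsets_iff)
    note d = tau_decomp[OF r s t(1,3)]
    show "card (\<sigma> \<inter> \<tau>) = ?j + ?g \<tau> \<and> ?g \<tau> \<le> m - k" using d t by auto
  qed
  have "(\<Sum>\<tau>\<in>?T. b (card (\<sigma> \<inter> \<tau>))) = (\<Sum>p\<in>{0..m-k}. \<Sum>\<tau>\<in>{\<tau>\<in>?T. ?g \<tau> = p}. b (card (\<sigma> \<inter> \<tau>)))"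
    by (rule sum.group[symmetric]) (use dec in auto)
  also have "\<dots> = (\<Sum>p\<in>{0..m-k}. of_nat (card {\<tau>\<in>msubsets n m. \<rho> \<subseteq> \<tau> \<and> card (\<sigma> \<inter> \<tau>) = ?j + p}) * b (?j + p))"
  proof (rule sum.cong[OF refl])
    fix p assume p: "p \<in> {0..m-k}"
    have e: "{\<tau>\<in>?T. ?g \<tau> = p} = {\<tau>\<in>msubsets n m. \<rho> \<subseteq> \<tau> \<and> card (\<sigma> \<inter> \<tau>) = ?j + p}"
      using dec by force
    have "(\<Sum>\<tau>\<in>{\<tau>\<in>?T. ?g \<tau> = p}. b (card (\<sigma> \<inter> \<tau>))) = (\<Sum>\<tau>\<in>{\<tau>\<in>?T. ?g \<tau> = p}. b (?j + p))"
      by (rule sum.cong) (use dec in auto)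
    thus "(\<Sum>\<tau>\<in>{\<tau>\<in>?T. ?g \<tau> = p}. b (card (\<sigma> \<inter> \<tau>))) =
      of_nat (card {\<tau>\<in>msubsets n m. \<rho> \<subseteq> \<tau> \<and> card (\<sigma> \<inter> \<tau>) = ?j + p}) * b (?j + p)"
      unfolding e by simp
  qed
  also have "\<dots> = Gf n m k b ?j"
    unfolding Gf_def by (rule sum.cong[OF refl]) (simp add: count_tau[OF r s km])
  finally show ?thesis .
qed

lemma lam_Gf: "lam n m k b = (\<Sum>j=0..k. (-1) ^ (k - j) * of_nat (k choose j) * Gf n m k b j)"
  unfolding lam_def Gf_def by (simp add: sum_distrib_left mult.assoc)

lemma Ncnt_k: "Ncnt n k w \<sigma> k = Wop n k w \<sigma>"
proof -
  have "{\<rho> \<in> msubsets n k. card (\<rho> \<inter> \<sigma>) = k} = {\<rho> \<in> msubsets n k. \<rho> \<subseteq> \<sigma>}"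
  proof (intro equalityI subsetI)
    fix \<rho> assume a: "\<rho> \<in> {\<rho> \<in> msubsets n k. card (\<rho> \<inter> \<sigma>) = k}"
    hence "\<rho> \<subseteq> {1..n}" "card \<rho> = k" "card (\<rho> \<inter> \<sigma>) = k" by (auto simp: msubsets_iff)
    hence "\<rho> \<inter> \<sigma> = \<rho>" by (metis card_subset_eq finite_atLeastAtMost finite_subset inf_le1)
    thus "\<rho> \<in> {\<rho> \<in> msubsets n k. \<rho> \<subseteq> \<sigma>}" using a by auto
  next
    fix \<rho> assume a: "\<rho> \<in> {\<rho> \<in> msubsets n k. \<rho> \<subseteq> \<sigma>}"
    thus "\<rho> \<in> {\<rho> \<in> msubsets n k. card (\<rho> \<inter> \<sigma>) = k}" by (auto simp: msubsets_iff Int_absorb2)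
  qed
  thus ?thesis unfolding Ncnt_def Wop_def by simp
qed

lemma eigen_W:
  assumes kd: "KD n k w" and km: "k \<le> m" "m + k \<le> n" and s: "\<sigma> \<in> msubsets n m"
  shows "Bop n m b (Wop n k w) \<sigma> = lam n m k b * Wop n k w \<sigma>"
proof -
  have "Bop n m b (Wop n k w) \<sigma> = (\<Sum>\<tau>\<in>msubsets n m. \<Sum>\<rho>\<in>{\<rho>\<in>msubsets n k. \<rho> \<subseteq> \<tau>}. b (card (\<sigma> \<inter> \<tau>)) * w \<rho>)"
    unfolding Bop_def Wop_def by (simp add: sum_distrib_left)
  also have "\<dots> = (\<Sum>\<rho>\<in>msubsets n k. \<Sum>\<tau>\<in>{\<tau>\<in>msubsets n m. \<rho> \<subseteq> \<tau>}. b (card (\<sigma> \<inter> \<tau>)) * w \<rho>)"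
    by (rule sum.swap_restrict) auto
  also have "\<dots> = (\<Sum>\<rho>\<in>msubsets n k. Gf n m k b (card (\<sigma> \<inter> \<rho>)) * w \<rho>)"
    by (rule sum.cong[OF refl]) (simp add: sum_distrib_right[symmetric] inner_sum[OF _ s km])
  also have "\<dots> = (\<Sum>j\<in>{0..k}. \<Sum>\<rho>\<in>{\<rho>\<in>msubsets n k. card (\<rho> \<inter> \<sigma>) = j}. Gf n m k b (card (\<sigma> \<inter> \<rho>)) * w \<rho>)"
  proof (rule sum.group[symmetric])
    show "(\<lambda>\<rho>. card (\<rho> \<inter> \<sigma>)) ` msubsets n k \<subseteq> {0..k}"
    proof
      fix x assume "x \<in> (\<lambda>\<rho>. card (\<rho> \<inter> \<sigma>)) ` msubsets n k"
      then obtain \<rho> where "\<rho> \<in> msubsets n k" "x = card (\<rho> \<inter> \<sigma>)" by auto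
      thus "x \<in> {0..k}" by (auto simp: msubsets_iff intro!: card_mono finite_subset[of _ "{1..n}"] elim!: ord_eq_le_trans[OF _ card_mono, rotated])
    qed
  qed auto
  also have "\<dots> = (\<Sum>j\<in>{0..k}. Gf n m k b j * Ncnt n k w \<sigma> j)"
    unfolding Ncnt_def sum_distrib_left by (rule sum.cong[OF refl], rule sum.cong) (auto simp: Int_commute)
  also have "\<dots> = (\<Sum>j\<in>{0..k}. Gf n m k b j * ((-1) ^ (k - j) * of_nat (k choose j) * Wop n k w \<sigma>))"
    by (rule sum.cong[OF refl]) (simp add: Ncnt_closed[OF kd] Ncnt_k)
  also have "\<dots> = lam n m k b * Wop n k w \<sigma>"
    unfolding lam_Gf sum_distrib_right by (rule sum.cong[OF refl]) (simp add: algebra_simps)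
  finally show ?thesis .
qed



lemma sum_invol:
  assumes "\<And>p. p \<in> G \<Longrightarrow> h p \<in> G" "\<And>p. p \<in> G \<Longrightarrow> h (h p) = p"
  shows "sum f G = sum (\<lambda>p. f (h p)) G"
  by (rule sum.reindex_bij_witness[of G h h]) (use assms in auto)

lemma sum_invol_neg:
  fixes f :: "'a \<Rightarrow> complex"
  assumes "\<And>p. p \<in> G \<Longrightarrow> h p \<in> G" "\<And>p. p \<in> G \<Longrightarrow> h (h p) = p"
    and "\<And>p. p \<in> G \<Longrightarrow> f (h p) = - f p"
  shows "sum f G = 0"
proof -
  have "sum f G = sum (\<lambda>p. f (h p)) G" by (rule sum_invol) (use assms in auto)
  also have "\<dots> = - sum f G" using assms(3) by (simp add: sum_negf)
  finally show ?thesis by simp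
qed

lemma row_groupD:
  assumes "p \<in> row_group n k"
  shows "p permutes {1..n}" "p ` {1..n-k} = {1..n-k}" "p ` {n-k+1..n} = {n-k+1..n}"
  using assms unfolding row_group_def tab_rows_def by auto

lemma col_groupD:
  assumes "q \<in> col_group n k"
  shows "q permutes {1..n}" "\<And>c. c \<in> tab_cols n k \<Longrightarrow> q ` c = c"
  using assms unfolding col_group_def by auto

lemma finite_row_group: "finite (row_group n k)"
  by (rule finite_subset[of _ "{p. p permutes {1..n}}"]) (auto simp: row_group_def finite_permutations)

lemma finite_col_group: "finite (col_group n k)"
  by (rule finite_subset[of _ "{p. p permutes {1..n}}"]) (auto simp: col_group_def finite_permutations)

lemma id_row_group: "id \<in> row_group n k" by (auto simp: row_group_def)
lemma id_col_group: "id \<in> col_group n k" by (auto simp: col_group_def)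

lemma col_group_comp:
  assumes "q \<in> col_group n k" "t \<in> col_group n k"
  shows "q \<circ> t \<in> col_group n k"
proof -
  have "\<And>c. c \<in> tab_cols n k \<Longrightarrow> (q \<circ> t) ` c = c"
    using assms unfolding col_group_def by (metis (mono_tags, lifting) image_comp mem_Collect_eq)
  thus ?thesis using assms unfolding col_group_def by (simp add: permutes_compose)
qed

lemma row_group_comp:
  assumes "q \<in> row_group n k" "t \<in> row_group n k"
  shows "q \<circ> t \<in> row_group n k"
proof -
  have "\<And>c. c \<in> tab_rows n k \<Longrightarrow> (q \<circ> t) ` c = c"
    using assms unfolding row_group_def by (metis (mono_tags, lifting) image_comp mem_Collect_eq)
  thus ?thesis using assms unfolding row_group_def by (simp add: permutes_compose)
qed

lemma transpose_image_move:
  assumes "x \<in> A" "y \<notin> A"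
  shows "transpose x y ` A = (A - {x}) \<union> {y}"
  using assms by (auto simp: transpose_def image_iff)

lemma perm_image_eq_iff:
  assumes "q permutes S"
  shows "q ` A = B \<longleftrightarrow> A = inv_into UNIV q ` B"
proof
  assume "q ` A = B"
  thus "A = inv_into UNIV q ` B" using permutes_inverses(2)[OF assms] by (auto simp: image_iff)
next
  assume "A = inv_into UNIV q ` B"
  thus "q ` A = B" using permutes_inverses(1)[OF assms] by (auto simp: image_iff)
qed

lemma perm_image_msubsets:
  assumes "q permutes {1..n}" "\<sigma> \<in> msubsets n m"
  shows "q ` \<sigma> \<in> msubsets n m"
proof -
  have "q ` \<sigma> \<subseteq> {1..n}" using assms permutes_image[OF assms(1)] unfolding msubsets_iff by blast
  moreover have "card (q ` \<sigma>) = card \<sigma>" by (rule card_image[OF permutes_inj_on[OF assms(1)]])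
  ultimately show ?thesis using assms(2) by (simp add: msubsets_iff)
qed


lemma transpose_image_invol: "transpose x y ` (transpose x y ` A) = A"
  by (simp add: image_comp)

lemma transpose_image_eq_iff: "transpose x y ` A = B \<longleftrightarrow> A = transpose x y ` B"
  using transpose_image_invol by metis

definition uf :: "nat \<Rightarrow> nat \<Rightarrow> nat \<Rightarrow> nat set \<Rightarrow> complex" where
  "uf n m k X = (\<Sum>p\<in>row_group n k. if p ` {n-m+1..n} = X then 1 else 0)"

lemma R2_sub_Om: "(k::nat) \<le> m \<Longrightarrow> {n-k+1..n} \<subseteq> {n-m+1..n}"
  using diff_le_mono2[of k m n] by auto

lemma Om_msubsets: "m \<le> n \<Longrightarrow> {n-m+1..n} \<in> msubsets n m"
  by (auto simp: msubsets_iff)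

lemma uf_zero:
  assumes km: "k \<le> m" and X: "\<not> {n-k+1..n} \<subseteq> X"
  shows "uf n m k X = 0"
  unfolding uf_def
proof (rule sum.neutral, intro ballI)
  fix p assume p: "p \<in> row_group n k"
  have "{n-k+1..n} = p ` {n-k+1..n}" using row_groupD(3)[OF p] by simp
  also have "\<dots> \<subseteq> p ` {n-m+1..n}" using R2_sub_Om[OF km] by (rule image_mono)
  finally have "p ` {n-m+1..n} \<noteq> X" using X by blast
  thus "(if p ` {n-m+1..n} = X then 1 else 0) = (0::complex)" by simp
qed

lemma uf_const_aux:
  assumes km: "k \<le> m" "m \<le> n"
  shows "\<forall>X. X \<in> msubsets n m \<and> {n-k+1..n} \<subseteq> X \<and> card (X - {n-m+1..n}) = d \<longrightarrow> uf n m k X = uf n m k {n-m+1..n}"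
proof (induction d)
  case 0
  show ?case
  proof (intro allI impI)
    fix X assume a: "X \<in> msubsets n m \<and> {n-k+1..n} \<subseteq> X \<and> card (X - {n-m+1..n}) = 0"
    have fX: "finite X" using a by (auto simp: msubsets_iff intro: finite_subset)
    have "X \<subseteq> {n-m+1..n}" using a fX by auto
    moreover have "card X = card {n-m+1..n}" using a km by (auto simp: msubsets_iff)
    ultimately have "X = {n-m+1..n}" by (metis card_subset_eq finite_atLeastAtMost)
    thus "uf n m k X = uf n m k {n-m+1..n}" by simp
  qed
next
  case (Suc d)
  show ?case
  proof (intro allI impI)
    fix X assume a: "X \<in> msubsets n m \<and> {n-k+1..n} \<subseteq> X \<and> card (X - {n-m+1..n}) = Suc d"
    have Xs: "X \<subseteq> {1..n}" "card X = m" and R2X: "{n-k+1..n} \<subseteq> X" using a by (auto simp: msubsets_iff)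
    have fX: "finite X" using Xs finite_subset by blast
    have "card (X - {n-m+1..n}) \<noteq> 0" using a by simp
    hence "X - {n-m+1..n} \<noteq> {}" by (metis card.empty)
    then obtain x where x: "x \<in> X" "x \<notin> {n-m+1..n}" by blast
    have "{n-m+1..n} - X \<noteq> {}"
    proof
      assume "{n-m+1..n} - X = {}"
      hence "{n-m+1..n} \<subseteq> X" by blast
      moreover have "card {n-m+1..n} = card X" using Xs km by simp
      ultimately have "{n-m+1..n} = X" using fX by (metis card_subset_eq)
      thus False using x by blast
    qed
    then obtain y where y: "y \<in> {n-m+1..n}" "y \<notin> X" by blast
    have "x \<notin> {n-k+1..n}" using x R2_sub_Om[OF km(1)] by blast
    hence x1: "x \<in> {1..n-k}" using x Xs by auto
    have "y \<notin> {n-k+1..n}" using y R2X by blast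
    hence y1: "y \<in> {1..n-k}" using y by auto
    define s where "s = transpose x y"
    have sperm: "s permutes {1..n}" unfolding s_def using x1 y1 by (intro permutes_swap_id) auto
    have sR1: "s ` {1..n-k} = {1..n-k}" unfolding s_def using x1 y1 by simp
    have sR2: "s ` {n-k+1..n} = {n-k+1..n}" unfolding s_def using x1 y1 by (intro transpose_image_eq) auto
    have srow: "s \<in> row_group n k" unfolding row_group_def tab_rows_def using sperm sR1 sR2 by auto
    define X' where "X' = s ` X"
    have X'eq: "X' = (X - {x}) \<union> {y}" unfolding X'_def s_def using x(1) y(2) by (rule transpose_image_move)
    have X'm: "X' \<in> msubsets n m" unfolding X'_def using sperm a by (intro perm_image_msubsets) auto
    have R2X': "{n-k+1..n} \<subseteq> X'" using R2X x1 unfolding X'eq by auto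
    have "X' - {n-m+1..n} = (X - {n-m+1..n}) - {x}" unfolding X'eq using y by auto
    hence "card (X' - {n-m+1..n}) = d" using a x fX by simp
    hence IH: "uf n m k X' = uf n m k {n-m+1..n}" using Suc.IH X'm R2X' by blast
    have "uf n m k X = (\<Sum>p\<in>row_group n k. if (s \<circ> p) ` {n-m+1..n} = X then 1 else 0)"
      unfolding uf_def
      by (rule sum_invol[of _ "\<lambda>p. s \<circ> p"]) (use row_group_comp[OF srow] in \<open>auto simp: s_def o_assoc[symmetric]\<close>)
    also have "\<dots> = uf n m k X'"
      unfolding uf_def X'_def image_comp[symmetric] s_def transpose_image_eq_iff[of x y _ X] ..
    finally show "uf n m k X = uf n m k {n-m+1..n}" using IH by simp
  qed
qed

lemma uf_char:
  assumes km: "k \<le> m" "m \<le> n" and X: "X \<in> msubsets n m"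
  shows "uf n m k X = (if {n-k+1..n} \<subseteq> X then uf n m k {n-m+1..n} else 0)"
  using uf_const_aux[OF km] uf_zero[OF km(1)] X by auto

lemma uf_Om_nz:
  "uf n m k {n-m+1..n} \<noteq> 0"
proof -
  have "uf n m k {n-m+1..n} = sum (\<lambda>_. 1) {p\<in>row_group n k. p ` {n-m+1..n} = {n-m+1..n}}"
    unfolding uf_def by (rule sum.inter_filter[OF finite_row_group, symmetric])
  hence "uf n m k {n-m+1..n} = of_nat (card {p\<in>row_group n k. p ` {n-m+1..n} = {n-m+1..n}})" by simp
  moreover have "card {p\<in>row_group n k. p ` {n-m+1..n} = {n-m+1..n}} \<noteq> 0"
    using id_row_group[of n k] finite_row_group[of n k] by (auto simp: card_eq_0_iff)
  ultimately show ?thesis by simp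
qed


definition w0 :: "nat \<Rightarrow> nat \<Rightarrow> nat set \<Rightarrow> complex" where
  "w0 n k \<rho> = (\<Sum>q\<in>col_group n k. of_int (sign q) * (if q ` {n-k+1..n} = \<rho> then 1 else 0))"

lemma col_R2_msub: "q \<in> col_group n k \<Longrightarrow> k \<le> n \<Longrightarrow> q ` {n-k+1..n} \<in> msubsets n k"
  by (rule perm_image_msubsets[OF col_groupD(1)], assumption, rule Om_msubsets)

lemma sum_w0_pred:
  assumes "k \<le> n"
  shows "sum (w0 n k) {\<rho>\<in>msubsets n k. P \<rho>} = (\<Sum>q\<in>col_group n k. of_int (sign q) * (if P (q ` {n-k+1..n}) then 1 else 0))"
proof -
  have "sum (w0 n k) {\<rho>\<in>msubsets n k. P \<rho>} = (\<Sum>\<rho>\<in>{\<rho>\<in>msubsets n k. P \<rho>}. \<Sum>q\<in>col_group n k. of_int (sign q) * (if q ` {n-k+1..n} = \<rho> then 1 else 0))"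
    unfolding w0_def ..
  also have "\<dots> = (\<Sum>q\<in>col_group n k. \<Sum>\<rho>\<in>{\<rho>\<in>msubsets n k. P \<rho>}. of_int (sign q) * (if q ` {n-k+1..n} = \<rho> then 1 else 0))"
    by (rule sum.swap)
  also have "\<dots> = (\<Sum>q\<in>col_group n k. of_int (sign q) * (if P (q ` {n-k+1..n}) then 1 else 0))"
  proof (rule sum.cong[OF refl])
    fix q assume q: "q \<in> col_group n k"
    have "(\<Sum>\<rho>\<in>{\<rho>\<in>msubsets n k. P \<rho>}. of_int (sign q) * (if q ` {n-k+1..n} = \<rho> then 1 else 0))
       = of_int (sign q) * (\<Sum>\<rho>\<in>{\<rho>\<in>msubsets n k. P \<rho>}. if q ` {n-k+1..n} = \<rho> then 1 else 0)"
      by (rule sum_distrib_left[symmetric])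
    also have "(\<Sum>\<rho>\<in>{\<rho>\<in>msubsets n k. P \<rho>}. if q ` {n-k+1..n} = \<rho> then (1::complex) else 0)
       = (if q ` {n-k+1..n} \<in> {\<rho>\<in>msubsets n k. P \<rho>} then 1 else 0)"
      by (rule sum.delta') simp
    also have "(if q ` {n-k+1..n} \<in> {\<rho>\<in>msubsets n k. P \<rho>} then (1::complex) else 0) = (if P (q ` {n-k+1..n}) then 1 else 0)"
      using col_R2_msub[OF q assms] by simp
    finally show "(\<Sum>\<rho>\<in>{\<rho>\<in>msubsets n k. P \<rho>}. of_int (sign q) * (if q ` {n-k+1..n} = \<rho> then 1 else 0))
       = of_int (sign q) * (if P (q ` {n-k+1..n}) then (1::complex) else 0)" .
  qed
  finally show ?thesis .
qed

lemma perm_sub_iff: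
  assumes "q permutes S"
  shows "A \<subseteq> inv_into UNIV q ` B \<longleftrightarrow> q ` A \<subseteq> B"
  using permutes_inverses[OF assms] by (auto simp: image_iff subset_iff) metis+

lemma pi_ck_eq:
  assumes km: "k \<le> m" "m \<le> n" and s: "\<sigma> \<in> msubsets n m"
  shows "pi_ck n m k \<sigma> = uf n m k {n-m+1..n} * Wop n k (w0 n k) \<sigma>"
proof -
  have "pi_ck n m k \<sigma> = (\<Sum>q\<in>col_group n k. of_int (sign q) * uf n m k (inv_into UNIV q ` \<sigma>))"
    unfolding pi_ck_def uf_def
  proof (rule sum.cong[OF refl])
    fix q assume q: "q \<in> col_group n k"
    have qp: "q permutes {1..n}" using col_groupD(1)[OF q] .
    show "(\<Sum>p\<in>row_group n k. of_int (sign q) * (if (q \<circ> p) ` {n-m+1..n} = \<sigma> then 1 else 0))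
      = of_int (sign q) * (\<Sum>p\<in>row_group n k. if p ` {n-m+1..n} = inv_into UNIV q ` \<sigma> then 1 else 0)"
      unfolding sum_distrib_left image_comp[symmetric] perm_image_eq_iff[OF qp] ..
  qed
  also have "\<dots> = (\<Sum>q\<in>col_group n k. of_int (sign q) * (uf n m k {n-m+1..n} * (if q ` {n-k+1..n} \<subseteq> \<sigma> then 1 else 0)))"
  proof (rule sum.cong[OF refl])
    fix q assume q: "q \<in> col_group n k"
    have qp: "q permutes {1..n}" using col_groupD(1)[OF q] .
    have qi: "inv_into UNIV q permutes {1..n}" using permutes_inv[OF qp] .
    have "inv_into UNIV q ` \<sigma> \<in> msubsets n m" by (rule perm_image_msubsets[OF qi s])
    thus "of_int (sign q) * uf n m k (inv_into UNIV q ` \<sigma>) = of_int (sign q) * (uf n m k {n-m+1..n} * (if q ` {n-k+1..n} \<subseteq> \<sigma> then 1 else 0))"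
      using uf_char[OF km] perm_sub_iff[OF qp] by simp
  qed
  also have "\<dots> = uf n m k {n-m+1..n} * (\<Sum>q\<in>col_group n k. of_int (sign q) * (if q ` {n-k+1..n} \<subseteq> \<sigma> then 1 else 0))"
    by (simp add: sum_distrib_left algebra_simps)
  also have "\<dots> = uf n m k {n-m+1..n} * Wop n k (w0 n k) \<sigma>"
    unfolding Wop_def using km by (subst sum_w0_pred) auto
  finally show ?thesis .
qed

lemma Wop_w0_Om:
  assumes km: "k \<le> m" "2 * m \<le> n"
  shows "Wop n k (w0 n k) {n-m+1..n} = 1"
proof -
  have kn: "k \<le> n" using km by simp
  have eq: "{q\<in>col_group n k. q ` {n-k+1..n} \<subseteq> {n-m+1..n}} = {id}"
  proof (intro equalityI subsetI)
    fix q assume "q \<in> {q\<in>col_group n k. q ` {n-k+1..n} \<subseteq> {n-m+1..n}}"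
    hence q: "q \<in> col_group n k" and sub: "q ` {n-k+1..n} \<subseteq> {n-m+1..n}" by auto
    have qp: "q permutes {1..n}" using col_groupD(1)[OF q] .
    have colj: "q ` {j, n-k+j} = {j, n-k+j}" if "1 \<le> j" "j \<le> k" for j
      using col_groupD(2)[OF q, of "{j, n-k+j}"] that km unfolding tab_cols_def
      by (auto intro!: image_eqI[of _ _ j])
    have colsing: "q j = j" if "k < j" "j \<le> n - k" for j
    proof -
      have "q ` {j} = {j}" using col_groupD(2)[OF q, of "{j}"] that unfolding tab_cols_def
        by (auto intro!: image_eqI[of _ _ j])
      thus ?thesis by simp
    qed
    have top: "q (n-k+j) = n-k+j" if "1 \<le> j" "j \<le> k" for j
    proof -
      have "q (n-k+j) \<in> {j, n-k+j}" using colj[OF that] by blast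
      moreover have "n-k+j \<in> {n-k+1..n}" using that km by auto
      hence "q (n-k+j) \<in> {n-m+1..n}" using sub by blast
      moreover have "j \<notin> {n-m+1..n}" using that km by auto
      ultimately show ?thesis by auto
    qed
    have bot: "q j = j" if "1 \<le> j" "j \<le> k" for j
    proof -
      have "q j \<in> {j, n-k+j}" using colj[OF that] by blast
      moreover have "q j \<noteq> n-k+j"
      proof
        assume "q j = n-k+j"
        hence "q j = q (n-k+j)" using top[OF that] by simp
        hence "j = n-k+j" using permutes_inj[OF qp] by (simp add: inj_eq)
        thus False using that km by simp
      qed
      ultimately show ?thesis by auto
    qed
    have "q x = x" for x
    proof (cases "x \<in> {1..n}")
      case False thus ?thesis using permutes_not_in[OF qp] by simp
    next
      case True
      show ?thesis
      proof (cases "x \<le> k")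
        case True thus ?thesis using bot[of x] \<open>x \<in> {1..n}\<close> by auto
      next
        case F: False
        show ?thesis
        proof (cases "x \<le> n - k")
          case True thus ?thesis using colsing F by simp
        next
          case False
          hence "x = n-k+(x-(n-k))" by simp
          moreover have "1 \<le> x-(n-k)" "x-(n-k) \<le> k" using False \<open>x \<in> {1..n}\<close> by auto
          ultimately show ?thesis using top[of "x-(n-k)"] by metis
        qed
      qed
    qed
    thus "q \<in> {id}" by (auto simp: fun_eq_iff)
  next
    fix q :: "nat \<Rightarrow> nat" assume "q \<in> {id}"
    thus "q \<in> {q\<in>col_group n k. q ` {n-k+1..n} \<subseteq> {n-m+1..n}}" using id_col_group R2_sub_Om[OF km(1)] by auto
  qed
  have "Wop n k (w0 n k) {n-m+1..n} = (\<Sum>q\<in>col_group n k. of_int (sign q) * (if q ` {n-k+1..n} \<subseteq> {n-m+1..n} then 1 else 0))"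
    unfolding Wop_def using kn by (rule sum_w0_pred)
  also have "\<dots> = (\<Sum>q\<in>{q\<in>col_group n k. q ` {n-k+1..n} \<subseteq> {n-m+1..n}}. of_int (sign q))"
    by (simp add: sum.inter_filter[OF finite_col_group] if_distrib cong: if_cong)
  also have "\<dots> = 1" unfolding eq by simp
  finally show ?thesis .
qed


lemma col_transpose:
  assumes j: "1 \<le> j" "j \<le> k" and kn: "2 * k \<le> n"
  shows "transpose j (n-k+j) \<in> col_group n k"
proof -
  have p: "transpose j (n-k+j) permutes {1..n}" using j kn by (intro permutes_swap_id) auto
  have "transpose j (n-k+j) ` c = c" if c: "c \<in> tab_cols n k" for c
  proof -
    from c obtain i where i: "i \<in> {1..n-k}" and ce: "c = (if i \<le> k then {i, n-k+i} else {i})"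
      unfolding tab_cols_def image_iff by blast
    have "j \<in> c \<longleftrightarrow> n-k+j \<in> c" using i j kn unfolding ce by auto
    thus ?thesis by (rule transpose_image_eq)
  qed
  thus ?thesis using p unfolding col_group_def by auto
qed

lemma sign_comp_transpose:
  fixes n :: nat
  assumes q: "q permutes {1..n}" and ab: "a \<noteq> b" "a \<in> {1..n}" "b \<in> {1..n}"
  shows "sign (q \<circ> transpose a b) = - sign q"
proof -
  have tp: "transpose a b permutes {1..n}" by (rule permutes_swap_id[OF ab(2,3)])
  have "sign (q \<circ> transpose a b) = sign q * sign (transpose a b)"
  proof (rule sign_compose)
    show "permutation q" by (rule permutes_imp_permutation[OF _ q]) simp
    show "permutation (transpose a b)" by (rule permutes_imp_permutation[OF _ tp]) simp
  qed
  thus ?thesis using ab by (simp add: sign_swap_id)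
qed

lemma KD_w0:
  assumes km: "k \<le> m" "2 * m \<le> n"
  shows "KD n k (w0 n k)"
  unfolding KD_def
proof (intro ballI impI)
  fix \<rho>' assume r': "\<rho>' \<in> msubsets n (k-1)" and k0: "0 < k"
  have kn: "k \<le> n" "2 * k \<le> n" using km by auto
  let ?R = "{n-k+1..n}"
  let ?G = "{q\<in>col_group n k. \<rho>' \<subseteq> q ` ?R}"
  have cr': "card \<rho>' = k - 1" using r' by (simp add: msubsets_iff)
  have fr': "finite \<rho>'" using r' by (auto simp: msubsets_iff intro: finite_subset)
  have ex1: "\<exists>!b. b \<in> ?R \<and> q b \<notin> \<rho>'" if q: "q \<in> ?G" for q
  proof -
    have qc: "q \<in> col_group n k" and sub: "\<rho>' \<subseteq> q ` ?R" using q by auto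
    have qp: "q permutes {1..n}" using col_groupD(1)[OF qc] .
    have inj: "inj q" using permutes_inj[OF qp] .
    have cqR: "card (q ` ?R) = k" using card_image[OF inj_on_subset[OF inj]] kn by simp
    have "\<not> q ` ?R \<subseteq> \<rho>'"
    proof
      assume "q ` ?R \<subseteq> \<rho>'"
      hence "card (q ` ?R) \<le> card \<rho>'" using fr' by (rule card_mono[rotated])
      thus False using cqR cr' k0 by simp
    qed
    then obtain b where b: "b \<in> ?R" "q b \<notin> \<rho>'" by blast
    moreover have "b' = b" if b': "b' \<in> ?R" "q b' \<notin> \<rho>'" for b'
    proof (rule ccontr)
      assume ne: "b' \<noteq> b"
      have "\<rho>' \<subseteq> q ` (?R - {b, b'})" using sub b b' by auto
      hence "card \<rho>' \<le> card (q ` (?R - {b, b'}))" by (rule card_mono[rotated]) simp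
      also have "\<dots> = card (?R - {b, b'})" using card_image[OF inj_on_subset[OF inj]] by simp
      also have "\<dots> = card ?R - card {b, b'}" by (rule card_Diff_subset) (use b(1) b'(1) in auto)
      also have "\<dots> = k - 2" using ne kn by simp
      finally have c1: "card \<rho>' \<le> k - 2" .
      have "card {b, b'} \<le> card ?R" by (rule card_mono) (use b(1) b'(1) in auto)
      hence "2 \<le> k" using ne kn by simp
      thus False using c1 cr' by simp
    qed
    ultimately show ?thesis by blast
  qed
  define bf where "bf q = (THE b. b \<in> ?R \<and> q b \<notin> \<rho>')" for q :: "nat \<Rightarrow> nat"
  have bf: "bf q \<in> ?R" "q (bf q) \<notin> \<rho>'" "\<And>b. b \<in> ?R \<Longrightarrow> q b \<notin> \<rho>' \<Longrightarrow> b = bf q" if q: "q \<in> ?G" for q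
  proof -
    have t: "bf q \<in> ?R \<and> q (bf q) \<notin> \<rho>'" unfolding bf_def by (rule theI'[OF ex1[OF q]])
    thus "bf q \<in> ?R" "q (bf q) \<notin> \<rho>'" by auto
    show "\<And>b. b \<in> ?R \<Longrightarrow> q b \<notin> \<rho>' \<Longrightarrow> b = bf q"
      unfolding bf_def by (rule the1_equality[OF ex1[OF q], symmetric]) simp
  qed
  define af where "af q = bf q - (n-k)" for q :: "nat \<Rightarrow> nat"
  have af: "1 \<le> af q" "af q \<le> k" "bf q = n-k+af q" "af q \<notin> ?R" "af q \<noteq> bf q" if q: "q \<in> ?G" for q
    using bf(1)[OF q] kn unfolding af_def by auto
  define h where "h q = q \<circ> transpose (af q) (bf q)" for q :: "nat \<Rightarrow> nat"
  have hG: "h q \<in> ?G" and haf: "af (h q) = af q" and hbf: "bf (h q) = bf q"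
    and hsign: "sign (h q) = - sign q" if q: "q \<in> ?G" for q
  proof -
    have qc: "q \<in> col_group n k" and sub: "\<rho>' \<subseteq> q ` ?R" using q by auto
    have qp: "q permutes {1..n}" using col_groupD(1)[OF qc] .
    have tc: "transpose (af q) (bf q) \<in> col_group n k"
      using col_transpose[OF af(1,2)[OF q] kn(2)] af(3)[OF q] by simp
    have hc: "h q \<in> col_group n k" unfolding h_def by (rule col_group_comp[OF qc tc])
    have sub2: "\<rho>' \<subseteq> h q ` ?R"
    proof
      fix z assume z: "z \<in> \<rho>'"
      then obtain b' where b': "b' \<in> ?R" "z = q b'" using sub by blast
      have "b' \<noteq> bf q" using bf(2)[OF q] b' z by auto
      moreover have "b' \<noteq> af q" using af(4)[OF q] b' by auto
      ultimately have "h q b' = z" unfolding h_def using b' by simp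
      thus "z \<in> h q ` ?R" using b'(1) by blast
    qed
    show hG': "h q \<in> ?G" using hc sub2 by simp
    have "h q (bf q) = q (af q)" unfolding h_def by simp
    moreover have "q (af q) \<notin> \<rho>'"
    proof
      assume "q (af q) \<in> \<rho>'"
      then obtain b' where "b' \<in> ?R" "q (af q) = q b'" using sub by blast
      hence "af q = b'" using permutes_inj[OF qp] by (simp add: inj_eq)
      thus False using af(4)[OF q] \<open>b' \<in> ?R\<close> by simp
    qed
    ultimately have "h q (bf q) \<notin> \<rho>'" by simp
    thus hb: "bf (h q) = bf q" using bf(3)[OF hG' bf(1)[OF q]] by simp
    show "af (h q) = af q" unfolding af_def hb ..
    show "sign (h q) = - sign q" unfolding h_def
      by (rule sign_comp_transpose[OF qp af(5)[OF q]]) (use af[OF q] bf(1)[OF q] kn in auto)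
  qed
  have hh: "h (h q) = q" if q: "q \<in> ?G" for q
  proof -
    have "h (h q) = q \<circ> transpose (af q) (bf q) \<circ> transpose (af q) (bf q)"
      unfolding h_def[of "h q"] haf[OF q] hbf[OF q] unfolding h_def ..
    also have "\<dots> = q" by (simp add: o_assoc[symmetric])
    finally show ?thesis .
  qed
  have "sum (w0 n k) {\<rho>\<in>msubsets n k. \<rho>' \<subseteq> \<rho>} = (\<Sum>q\<in>col_group n k. of_int (sign q) * (if \<rho>' \<subseteq> q ` ?R then 1 else 0))"
    using kn(1) by (rule sum_w0_pred)
  also have "\<dots> = (\<Sum>q\<in>?G. of_int (sign q))"
    by (simp add: sum.inter_filter[OF finite_col_group] if_distrib cong: if_cong)
  also have "\<dots> = 0"
    by (rule sum_invol_neg[of _ h]) (use hG hh hsign in auto)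
  finally show "sum (w0 n k) {\<rho>\<in>msubsets n k. \<rho>' \<subseteq> \<rho>} = 0" .
qed



lemma part1:
  assumes n: "n > 0" and m: "m \<le> n div 2" and km: "k \<le> m"
  shows "(\<exists>\<sigma>\<in>msubsets n m. pi_ck n m k \<sigma> \<noteq> 0) \<and>
         (\<forall>\<sigma>\<in>msubsets n m. Bop n m b (pi_ck n m k) \<sigma> = lam n m k b * pi_ck n m k \<sigma>)"
proof
  have m2: "2 * m \<le> n" using m by simp
  hence mn: "m \<le> n" "m + k \<le> n" using km by auto
  let ?c = "uf n m k {n-m+1..n}"
  have pe: "\<And>\<sigma>. \<sigma> \<in> msubsets n m \<Longrightarrow> pi_ck n m k \<sigma> = ?c * Wop n k (w0 n k) \<sigma>"
    using pi_ck_eq[OF km mn(1)] by blast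
  show "\<exists>\<sigma>\<in>msubsets n m. pi_ck n m k \<sigma> \<noteq> 0"
  proof
    show "{n-m+1..n} \<in> msubsets n m" using Om_msubsets[OF mn(1)] .
    show "pi_ck n m k {n-m+1..n} \<noteq> 0"
      using pe[OF Om_msubsets[OF mn(1)]] Wop_w0_Om[OF km m2] uf_Om_nz[of n m k] by simp
  qed
  show "\<forall>\<sigma>\<in>msubsets n m. Bop n m b (pi_ck n m k) \<sigma> = lam n m k b * pi_ck n m k \<sigma>"
  proof
    fix \<sigma> assume s: "\<sigma> \<in> msubsets n m"
    have "Bop n m b (pi_ck n m k) \<sigma> = (\<Sum>\<tau>\<in>msubsets n m. b (card (\<sigma> \<inter> \<tau>)) * (?c * Wop n k (w0 n k) \<tau>))"
      unfolding Bop_def by (rule sum.cong[OF refl]) (simp add: pe)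
    also have "\<dots> = ?c * Bop n m b (Wop n k (w0 n k)) \<sigma>"
      unfolding Bop_def sum_distrib_left by (rule sum.cong[OF refl]) (simp add: algebra_simps)
    also have "\<dots> = ?c * (lam n m k b * Wop n k (w0 n k) \<sigma>)"
      using eigen_W[OF KD_w0[OF km m2] km mn(2) s] by simp
    also have "\<dots> = lam n m k b * pi_ck n m k \<sigma>" using pe[OF s] by simp
    finally show "Bop n m b (pi_ck n m k) \<sigma> = lam n m k b * pi_ck n m k \<sigma>" .
  qed
qed

lemma count_between:
  assumes r: "\<rho> \<in> msubsets n k" and T: "T \<subseteq> {1..n}" and km: "k \<le> m"
  shows "card {\<sigma>\<in>{\<sigma>\<in>msubsets n m. \<sigma> \<subseteq> T}. \<rho> \<subseteq> \<sigma>} = (if \<rho> \<subseteq> T then (card T - k) choose (m-k) else 0)"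
proof (cases "\<rho> \<subseteq> T")
  case False
  hence "{\<sigma>\<in>{\<sigma>\<in>msubsets n m. \<sigma> \<subseteq> T}. \<rho> \<subseteq> \<sigma>} = {}" by auto
  thus ?thesis using False by simp
next
  case True
  have rs: "\<rho> \<subseteq> {1..n}" "card \<rho> = k" using r by (auto simp: msubsets_iff)
  have fr: "finite \<rho>" using rs finite_subset by blast
  have fT: "finite T" using T finite_subset by blast
  define X where "X = T - \<rho>"
  have fX: "finite X" using fT unfolding X_def by simp
  have cX: "card X = card T - k" unfolding X_def using True fr rs by (simp add: card_Diff_subset)
  have eq: "{\<sigma>\<in>{\<sigma>\<in>msubsets n m. \<sigma> \<subseteq> T}. \<rho> \<subseteq> \<sigma>} = {\<tau>. \<rho> \<subseteq> \<tau> \<and> \<tau> \<subseteq> \<rho> \<union> X \<union> {} \<and> card (\<tau> \<inter> X) = m - k \<and> card (\<tau> \<inter> {}) = 0}"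
  proof (intro equalityI subsetI)
    fix \<tau> assume "\<tau> \<in> {\<sigma>\<in>{\<sigma>\<in>msubsets n m. \<sigma> \<subseteq> T}. \<rho> \<subseteq> \<sigma>}"
    hence t: "\<tau> \<subseteq> T" "card \<tau> = m" "\<rho> \<subseteq> \<tau>" by (auto simp: msubsets_iff)
    have ft: "finite \<tau>" using t fT finite_subset by blast
    have "\<tau> \<inter> X = \<tau> - \<rho>" unfolding X_def using t by blast
    hence "card (\<tau> \<inter> X) = m - k" using t rs fr by (simp add: card_Diff_subset)
    moreover have "\<tau> \<subseteq> \<rho> \<union> X \<union> {}" unfolding X_def using t by blast
    ultimately show "\<tau> \<in> {\<tau>. \<rho> \<subseteq> \<tau> \<and> \<tau> \<subseteq> \<rho> \<union> X \<union> {} \<and> card (\<tau> \<inter> X) = m - k \<and> card (\<tau> \<inter> {}) = 0}"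
      using t by simp
  next
    fix \<tau> assume "\<tau> \<in> {\<tau>. \<rho> \<subseteq> \<tau> \<and> \<tau> \<subseteq> \<rho> \<union> X \<union> {} \<and> card (\<tau> \<inter> X) = m - k \<and> card (\<tau> \<inter> {}) = 0}"
    hence t: "\<rho> \<subseteq> \<tau>" "\<tau> \<subseteq> \<rho> \<union> X" "card (\<tau> \<inter> X) = m - k" by auto
    have tT: "\<tau> \<subseteq> T" using t True unfolding X_def by blast
    have e: "\<tau> = \<rho> \<union> (\<tau> \<inter> X)" using t unfolding X_def by blast
    have "card \<tau> = card (\<rho> \<union> (\<tau> \<inter> X))" using e by (rule arg_cong)
    also have "\<dots> = card \<rho> + card (\<tau> \<inter> X)" by (rule card_Un_disjoint) (use fr fX in \<open>auto simp: X_def\<close>)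
    finally have "card \<tau> = m" using t rs km by simp
    thus "\<tau> \<in> {\<sigma>\<in>{\<sigma>\<in>msubsets n m. \<sigma> \<subseteq> T}. \<rho> \<subseteq> \<sigma>}" using tT T t by (auto simp: msubsets_iff)
  qed
  have dj: "X \<inter> {} = {}" "\<rho> \<inter> X = {}" "\<rho> \<inter> {} = {}" unfolding X_def by auto
  show ?thesis unfolding eq card_split_count[OF fX finite.emptyI fr dj] cX using True by simp
qed

lemma sum_sub_T_zero:
  assumes W0: "\<forall>\<sigma>\<in>msubsets n m. Wop n k w \<sigma> = 0" and T: "T \<subseteq> {1..n}" "m \<le> card T" and km: "k \<le> m"
  shows "sum w {\<rho>\<in>msubsets n k. \<rho> \<subseteq> T} = 0"
proof -
  let ?A = "{\<sigma>\<in>msubsets n m. \<sigma> \<subseteq> T}"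
  let ?c = "(card T - k) choose (m-k)"
  have "0 = (\<Sum>\<sigma>\<in>?A. Wop n k w \<sigma>)" using W0 by simp
  also have "\<dots> = (\<Sum>\<sigma>\<in>?A. sum w {\<rho>\<in>msubsets n k. \<rho> \<subseteq> \<sigma>})" unfolding Wop_def ..
  also have "\<dots> = (\<Sum>\<rho>\<in>msubsets n k. of_nat (card {\<sigma>\<in>?A. \<rho> \<subseteq> \<sigma>}) * w \<rho>)"
    by (rule sum_swap_count) auto
  also have "\<dots> = (\<Sum>\<rho>\<in>msubsets n k. of_nat ?c * (if \<rho> \<subseteq> T then w \<rho> else 0))"
  proof (rule sum.cong[OF refl])
    fix \<rho> assume r: "\<rho> \<in> msubsets n k"
    note cb = count_between[OF r T(1) km]
    show "of_nat (card {\<sigma>\<in>?A. \<rho> \<subseteq> \<sigma>}) * w \<rho> = of_nat ?c * (if \<rho> \<subseteq> T then w \<rho> else 0)"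
      by (cases "\<rho> \<subseteq> T") (simp_all only: cb if_True if_False, simp_all)
  qed
  also have "\<dots> = of_nat ?c * sum w {\<rho>\<in>msubsets n k. \<rho> \<subseteq> T}"
    by (simp add: sum_distrib_left sum.inter_filter)
  finally have "of_nat ?c * sum w {\<rho>\<in>msubsets n k. \<rho> \<subseteq> T} = 0" by simp
  moreover have "?c \<noteq> 0" using T km by simp
  ultimately show ?thesis by simp
qed

lemma W_inj:
  assumes kd: "KD n k w" and km: "k \<le> m" "2 * m \<le> n"
    and W0: "\<forall>\<sigma>\<in>msubsets n m. Wop n k w \<sigma> = 0" and r0: "\<rho>0 \<in> msubsets n k"
  shows "w \<rho>0 = 0"
proof -
  define T where "T = {1..n} - \<rho>0"
  have rs: "\<rho>0 \<subseteq> {1..n}" "card \<rho>0 = k" using r0 by (auto simp: msubsets_iff)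
  have cT: "card T = n - k" unfolding T_def using rs by (simp add: card_Diff_subset finite_subset)
  have T1: "T \<subseteq> {1..n}" unfolding T_def by auto
  have "Ncnt n k w T k = 0"
    unfolding Ncnt_k Wop_def using sum_sub_T_zero[OF W0 T1 _ km(1)] cT km by simp
  hence N0: "Ncnt n k w T 0 = 0" using Ncnt_closed[OF kd, of 0 T] by simp
  have "{\<rho>\<in>msubsets n k. card (\<rho> \<inter> T) = 0} = {\<rho>0}"
  proof (intro equalityI subsetI)
    fix \<rho> assume "\<rho> \<in> {\<rho>\<in>msubsets n k. card (\<rho> \<inter> T) = 0}"
    hence a: "\<rho> \<subseteq> {1..n}" "card \<rho> = k" "card (\<rho> \<inter> T) = 0" by (auto simp: msubsets_iff)
    have fr: "finite \<rho>" using a(1) finite_subset by blast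
    hence "\<rho> \<inter> T = {}" using a(3) by simp
    hence "\<rho> \<subseteq> \<rho>0" using a(1) unfolding T_def by blast
    hence "\<rho> = \<rho>0" using a(2) rs by (metis card_subset_eq finite_subset finite_atLeastAtMost)
    thus "\<rho> \<in> {\<rho>0}" by simp
  next
    fix \<rho> assume "\<rho> \<in> {\<rho>0}"
    thus "\<rho> \<in> {\<rho>\<in>msubsets n k. card (\<rho> \<inter> T) = 0}" using r0 unfolding T_def by auto
  qed
  thus ?thesis using N0 unfolding Ncnt_def by simp
qed



lemma kernel_dim_ge:
  fixes A :: "'a :: field mat"
  assumes A: "A \<in> carrier_mat nr nc"
  shows "nc - nr \<le> kernel.dim nc A"
proof -
  obtain G where gj: "gauss_jordan_single A = G" by auto
  note g = gauss_jordan_single[OF A gj]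
  from g(4) obtain P Q where GPA: "G = P * A" and P: "P \<in> carrier_mat nr nr" and Q: "Q \<in> carrier_mat nr nr"
    and QP: "Q * P = 1\<^sub>m nr" by blast
  have "nc - nr \<le> nc - card {i. i < nr \<and> row G i \<noteq> 0\<^sub>v nc}"
  proof -
    have "card {i. i < nr \<and> row G i \<noteq> 0\<^sub>v nc} \<le> card {..<nr}" by (rule card_mono) auto
    thus ?thesis by simp
  qed
  also have "\<dots> = kernel.dim nc G" using find_base_vectors(6)[OF g(3) g(2)] by simp
  also have "mat_kernel G = mat_kernel A" unfolding GPA by (rule mat_kernel_mult_eq[OF A P Q QP])
  finally show ?thesis .
qed

lemma geo_le_alg:
  fixes A :: "complex mat"
  assumes A: "A \<in> carrier_mat N N"
  shows "kernel_dim (char_matrix A e) \<le> Polynomial.order e (char_poly A)"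
proof -
  obtain as where "char_poly A = (\<Prod>a\<leftarrow>as. [:- a, 1:])" using char_poly_factorized[OF A] by blast
  from jordan_nf_exists[OF A this] obtain n_as where jnf: "jordan_nf A n_as" by blast
  have "kernel_dim (char_matrix A e) = dim_gen_eigenspace A e 1"
    unfolding dim_gen_eigenspace_def using A by simp
  also have "\<dots> = (\<Sum>n\<leftarrow>map fst [(n, e')\<leftarrow>n_as . e' = e]. min 1 n)" by (rule dim_gen_eigenspace[OF jnf])
  also have "\<dots> \<le> (\<Sum>n\<leftarrow>map fst [(n, e')\<leftarrow>n_as . e' = e]. n)" by (rule sum_list_mono) simp
  also have "\<dots> = Polynomial.order e (char_poly A)" unfolding jordan_nf_order[OF jnf]
    by (induction n_as) (auto split: prod.splits)
  finally show ?thesis .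
qed

lemma sum_orders_aux:
  fixes n_as :: "(nat \<times> 'a) list"
  assumes inj: "inj_on g J" and fin: "finite J"
  shows "(\<Sum>j\<in>J. sum_list (map fst (filter (\<lambda>na. snd na = g j) n_as))) \<le> sum_list (map fst n_as)"
proof (induction n_as)
  case Nil thus ?case by simp
next
  case (Cons na n_as)
  obtain n a where na: "na = (n, a)" by force
  have split: "sum_list (map fst (filter (\<lambda>na. snd na = g j) (na # n_as)))
      = (if g j = a then n else 0) + sum_list (map fst (filter (\<lambda>na. snd na = g j) n_as))" for j
    unfolding na by auto
  have c1: "card {j\<in>J. g j = a} \<le> 1"
  proof -
    have "{j\<in>J. g j = a} \<subseteq> {the_inv_into J g a}"
    proof
      fix j assume "j \<in> {j\<in>J. g j = a}"
      hence "j \<in> J" "g j = a" by auto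
      thus "j \<in> {the_inv_into J g a}" using the_inv_into_f_eq[OF inj] by auto
    qed
    from card_mono[OF _ this] show ?thesis by simp
  qed
  have "(\<Sum>j\<in>J. (if g j = a then n else 0)) = sum (\<lambda>_. n) {j\<in>J. g j = a}"
    by (rule sum.inter_filter[OF fin, symmetric])
  also have "\<dots> = card {j\<in>J. g j = a} * n" by simp
  also have "\<dots> \<le> n" using c1 by (metis mult_1 mult_le_mono1)
  finally have s1: "(\<Sum>j\<in>J. (if g j = a then n else 0)) \<le> n" .
  have "(\<Sum>j\<in>J. sum_list (map fst (filter (\<lambda>na. snd na = g j) (na # n_as))))
      = (\<Sum>j\<in>J. (if g j = a then n else 0)) + (\<Sum>j\<in>J. sum_list (map fst (filter (\<lambda>na. snd na = g j) n_as)))"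
    unfolding split by (rule sum.distrib)
  also have "\<dots> \<le> n + sum_list (map fst n_as)" using s1 Cons.IH by (rule add_mono)
  also have "\<dots> = sum_list (map fst (na # n_as))" unfolding na by simp
  finally show ?case .
qed

lemma sum_orders_le:
  fixes A :: "complex mat"
  assumes A: "A \<in> carrier_mat N N" and inj: "inj_on g J" and fin: "finite J"
  shows "(\<Sum>j\<in>J. Polynomial.order (g j) (char_poly A)) \<le> N"
proof -
  obtain as where "char_poly A = (\<Prod>a\<leftarrow>as. [:- a, 1:])" using char_poly_factorized[OF A] by blast
  from jordan_nf_exists[OF A this] obtain n_as where jnf: "jordan_nf A n_as" by blast
  have N: "N = sum_list (map fst n_as)"
  proof -
    from jnf have "similar_mat A (jordan_matrix n_as)" unfolding jordan_nf_def by auto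
    from similar_matD[OF this] obtain n' where c1: "A \<in> carrier_mat n' n'" and c2: "jordan_matrix n_as \<in> carrier_mat n' n'" by auto
    have "dim_row (jordan_matrix n_as) = n'" using carrier_matD(1)[OF c2] .
    moreover have "N = n'" using carrier_matD(1)[OF c1] carrier_matD(1)[OF A] by simp
    ultimately show ?thesis using jordan_matrix_dim(1)[of n_as] by simp
  qed
  show ?thesis unfolding jordan_nf_order[OF jnf] N by (rule sum_orders_aux[OF inj fin])
qed


lemma dim_transfer:
  fixes A :: "'a::field mat"
  assumes A: "A \<in> carrier_mat nr nc" and C: "C \<in> carrier_mat N N" and W: "W \<in> carrier_mat N nc"
    and CW: "\<And>x. x \<in> mat_kernel A \<Longrightarrow> C *\<^sub>v (W *\<^sub>v x) = 0\<^sub>v N"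
    and inj: "\<And>x. x \<in> mat_kernel A \<Longrightarrow> W *\<^sub>v x = 0\<^sub>v N \<Longrightarrow> x = 0\<^sub>v nc"
  shows "nc - nr \<le> kernel_dim C"
proof -
  interpret KA: kernel nr nc A by unfold_locales (rule A)
  interpret KC: kernel N N C by unfold_locales (rule C)
  obtain B where finB: "finite B" and bas: "KA.basis B" using kernel_basis_exists[OF A] by blast
  have BK: "B \<subseteq> mat_kernel A" and liB: "KA.lin_indpt B" using bas unfolding KA.Ker.basis_def by auto
  have dimB: "KA.dim = card B" by (rule KA.Ker.dim_basis[OF finB bas])
  have ge: "nc - nr \<le> card B" using kernel_dim_ge[OF A] dimB by simp
  have Kc: "\<And>x. x \<in> mat_kernel A \<Longrightarrow> x \<in> carrier_vec nc" using mat_kernelD(1)[OF A] by blast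
  let ?f = "\<lambda>x. W *\<^sub>v x"
  have injB: "inj_on ?f B"
  proof (rule inj_onI)
    fix x y assume x: "x \<in> B" and y: "y \<in> B" and e: "W *\<^sub>v x = W *\<^sub>v y"
    have xk: "x \<in> mat_kernel A" and yk: "y \<in> mat_kernel A" using x y BK by auto
    have xc: "x \<in> carrier_vec nc" and yc: "y \<in> carrier_vec nc" using Kc xk yk by auto
    have "A *\<^sub>v (x - y) = A *\<^sub>v x - A *\<^sub>v y" using mult_minus_distrib_mat_vec[OF A xc yc] .
    also have "\<dots> = 0\<^sub>v nr" using mat_kernelD(2)[OF A xk] mat_kernelD(2)[OF A yk] by simp
    finally have dk: "x - y \<in> mat_kernel A" using xc yc by (intro mat_kernelI[OF A]) auto
    have "W *\<^sub>v (x - y) = W *\<^sub>v x - W *\<^sub>v y" using mult_minus_distrib_mat_vec[OF W xc yc] .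
    also have "\<dots> = 0\<^sub>v N" unfolding e by (rule minus_cancel_vec[OF mult_mat_vec_carrier[OF W yc]])
    finally have "x - y = 0\<^sub>v nc" using inj[OF dk] by simp
    hence "\<And>i. i < nc \<Longrightarrow> (x - y) $ i = 0" by simp
    hence "\<And>i. i < nc \<Longrightarrow> x $ i = y $ i" using xc yc by simp
    thus "x = y" using xc yc by (intro eq_vecI) auto
  qed
  let ?S = "?f ` B"
  have SK: "?S \<subseteq> mat_kernel C"
  proof
    fix v assume "v \<in> ?S"
    then obtain x where x: "x \<in> B" "v = W *\<^sub>v x" by blast
    have xk: "x \<in> mat_kernel A" using x BK by auto
    show "v \<in> mat_kernel C" unfolding x(2) using CW[OF xk] Kc[OF xk] W by (intro mat_kernelI[OF C]) auto
  qed
  have liS: "KC.lin_indpt ?S"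
  proof
    assume "KC.lin_dep ?S"
    then obtain U a v where finU: "finite U" and US: "U \<subseteq> ?S" and lc: "KC.lincomb a U = 0\<^sub>v N"
      and vU: "v \<in> U" and av: "a v \<noteq> 0"
      unfolding KC.Ker.lin_dep_def by auto
    define U0 where "U0 = {x\<in>B. W *\<^sub>v x \<in> U}"
    have U0B: "U0 \<subseteq> B" unfolding U0_def by auto
    have finU0: "finite U0" using finB U0B finite_subset by blast
    have imU0: "?f ` U0 = U" unfolding U0_def using US by auto
    have injU0: "inj_on ?f U0" using inj_on_subset[OF injB U0B] .
    define a' where "a' x = a (W *\<^sub>v x)" for x
    have U0K: "U0 \<subseteq> mat_kernel A" using U0B BK by auto
    have UK: "U \<subseteq> mat_kernel C" using US SK by auto
    define z where "z = KA.lincomb a' U0"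
    have zk: "z \<in> mat_kernel A" unfolding z_def by (rule KA.Ker.lincomb_closed[OF U0K]) auto
    have zc: "z \<in> carrier_vec nc" using Kc[OF zk] .
    have zi: "z $ j = (\<Sum>x\<in>U0. a' x * x $ j)" if "j < nc" for j
      unfolding z_def by (rule KA.lincomb_index[OF that U0K])
    have "W *\<^sub>v z = 0\<^sub>v N"
    proof (rule eq_vecI)
      show "dim_vec (W *\<^sub>v z) = dim_vec (0\<^sub>v N)" using W by simp
      fix i assume "i < dim_vec (0\<^sub>v N)"
      hence i: "i < N" by simp
      have "(W *\<^sub>v z) $ i = (\<Sum>j<nc. W $$ (i,j) * z $ j)"
        using W zc i by (simp add: scalar_prod_def atLeast0LessThan)
      also have "\<dots> = (\<Sum>j<nc. W $$ (i,j) * (\<Sum>x\<in>U0. a' x * x $ j))" by (simp add: zi)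
      also have "\<dots> = (\<Sum>x\<in>U0. a' x * (\<Sum>j<nc. W $$ (i,j) * x $ j))"
        by (simp add: sum_distrib_left sum_distrib_right sum.swap[of _ U0] algebra_simps)
      also have "\<dots> = (\<Sum>x\<in>U0. a' x * (W *\<^sub>v x) $ i)"
      proof (rule sum.cong[OF refl])
        fix x assume "x \<in> U0"
        hence xc: "x \<in> carrier_vec nc" using U0K Kc by auto
        show "a' x * (\<Sum>j<nc. W $$ (i,j) * x $ j) = a' x * (W *\<^sub>v x) $ i"
          using W xc i by (simp add: scalar_prod_def atLeast0LessThan)
      qed
      also have "\<dots> = (\<Sum>u\<in>U. a u * u $ i)"
        unfolding imU0[symmetric] sum.reindex[OF injU0] a'_def by simp
      also have "\<dots> = KC.lincomb a U $ i" by (rule KC.lincomb_index[OF i UK, symmetric])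
      also have "\<dots> = 0\<^sub>v N $ i" unfolding lc ..
      finally show "(W *\<^sub>v z) $ i = 0\<^sub>v N $ i" .
    qed
    hence z0: "z = 0\<^sub>v nc" using inj[OF zk] by simp
    obtain x0 where x0: "x0 \<in> U0" "v = W *\<^sub>v x0" using vU imU0 by blast
    have "KA.lin_dep B"
      unfolding KA.Ker.lin_dep_def
      by (rule exI[of _ U0], rule exI[of _ a'], rule exI[of _ x0])
         (use finU0 U0B z0 x0 av in \<open>auto simp: z_def a'_def\<close>)
    thus False using liB by simp
  qed
  have fdC: "KC.Ker.fin_dim"
  proof -
    obtain BC where "finite BC" "KC.basis BC" using kernel_basis_exists[OF C] by blast
    thus ?thesis unfolding KC.Ker.fin_dim_def KC.Ker.basis_def by auto
  qed
  have "card ?S \<le> KC.dim" by (rule KC.Ker.li_le_dim(2)[OF fdC SK liS])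
  moreover have "card ?S = card B" by (rule card_image[OF injB])
  moreover have "kernel_dim C = KC.dim" by (rule KC.kernel_dim)
  ultimately show ?thesis using ge by simp
qed



lemma subset_list: "distinct (subset_list n r) \<and> set (subset_list n r) = msubsets n r"
proof -
  obtain xs where "set xs = msubsets n r \<and> distinct xs" using finite_distinct_list[OF finite_msubsets] by blast
  hence "\<exists>xs. distinct xs \<and> set xs = msubsets n r" by blast
  thus ?thesis unfolding subset_list_def by (rule someI_ex)
qed

lemma len_subset_list: "length (subset_list n r) = n choose r"
  using distinct_card[of "subset_list n r"] subset_list[of n r] card_msubsets[of n r] by simp

lemma subset_list_nth: "i < length (subset_list n r) \<Longrightarrow> subset_list n r ! i \<in> msubsets n r"
  using subset_list[of n r] nth_mem by blast

lemma sum_msubsets_idx: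
  "sum f (msubsets n r) = (\<Sum>i<length (subset_list n r). f (subset_list n r ! i))"
proof -
  let ?L = "subset_list n r"
  have "msubsets n r = (nth ?L) ` {..<length ?L}" using subset_list[of n r] by (auto simp: set_conv_nth)
  moreover have "inj_on (nth ?L) {..<length ?L}" using subset_list[of n r] by (intro inj_on_nth) auto
  ultimately show ?thesis by (simp add: sum.reindex)
qed

lemma msubsets_idx: "\<rho> \<in> msubsets n r \<Longrightarrow> \<exists>i<length (subset_list n r). subset_list n r ! i = \<rho>"
  using subset_list[of n r] by (auto simp: in_set_conv_nth)

definition idx :: "nat \<Rightarrow> nat \<Rightarrow> nat set \<Rightarrow> nat" where
  "idx n r \<rho> = (THE j. j < length (subset_list n r) \<and> subset_list n r ! j = \<rho>)"

lemma idx_nth: "j < length (subset_list n r) \<Longrightarrow> idx n r (subset_list n r ! j) = j"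
  unfolding idx_def
  by (rule the_equality) (use subset_list[of n r] nth_eq_iff_index_eq in auto)

definition funof :: "nat \<Rightarrow> nat \<Rightarrow> complex vec \<Rightarrow> nat set \<Rightarrow> complex" where
  "funof n r x \<rho> = x $ idx n r \<rho>"

lemma funof_nth: "j < length (subset_list n r) \<Longrightarrow> funof n r x (subset_list n r ! j) = x $ j"
  unfolding funof_def by (simp add: idx_nth)

definition Dm :: "nat \<Rightarrow> nat \<Rightarrow> complex mat" where
  "Dm n k = mat (if k = 0 then 0 else length (subset_list n (k-1))) (length (subset_list n k))
     (\<lambda>(i,j). if subset_list n (k-1) ! i \<subseteq> subset_list n k ! j then 1 else 0)"

definition Wm :: "nat \<Rightarrow> nat \<Rightarrow> nat \<Rightarrow> complex mat" where
  "Wm n m k = mat (length (subset_list n m)) (length (subset_list n k))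
     (\<lambda>(i,j). if subset_list n k ! j \<subseteq> subset_list n m ! i then 1 else 0)"

lemma mat_vec_idx:
  assumes "A \<in> carrier_mat nr nc" "x \<in> carrier_vec nc" "i < nr"
  shows "(A *\<^sub>v x) $ i = (\<Sum>j<nc. A $$ (i,j) * x $ j)"
  using assms by (simp add: scalar_prod_def atLeast0LessThan)

lemma KD_of_kernel:
  assumes x: "x \<in> mat_kernel (Dm n k)"
  shows "KD n k (funof n k x)"
  unfolding KD_def
proof (intro ballI impI)
  fix \<rho>' assume r': "\<rho>' \<in> msubsets n (k-1)" and k: "0 < k"
  let ?Lk = "subset_list n k" and ?Lk1 = "subset_list n (k-1)"
  have D: "Dm n k \<in> carrier_mat (length ?Lk1) (length ?Lk)" using k unfolding Dm_def by simp
  have xc: "x \<in> carrier_vec (length ?Lk)" and Dx: "Dm n k *\<^sub>v x = 0\<^sub>v (length ?Lk1)"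
    using mat_kernelD[OF D x] by auto
  obtain i where i: "i < length ?Lk1" "?Lk1 ! i = \<rho>'" using msubsets_idx[OF r'] by blast
  have "sum (funof n k x) {\<rho>\<in>msubsets n k. \<rho>' \<subseteq> \<rho>} = (\<Sum>\<rho>\<in>msubsets n k. if \<rho>' \<subseteq> \<rho> then funof n k x \<rho> else 0)"
    by (rule sum.inter_filter) simp
  also have "\<dots> = (\<Sum>j<length ?Lk. if \<rho>' \<subseteq> ?Lk ! j then x $ j else 0)"
    unfolding sum_msubsets_idx by (rule sum.cong[OF refl]) (simp add: funof_nth)
  also have "\<dots> = (\<Sum>j<length ?Lk. (if \<rho>' \<subseteq> ?Lk ! j then 1 else 0) * x $ j)"
    by (rule sum.cong) auto
  also have "\<dots> = (Dm n k *\<^sub>v x) $ i"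
    using mat_vec_idx[OF D xc i(1)] i k by (auto simp: Dm_def intro!: sum.cong)
  also have "\<dots> = 0" using Dx i by simp
  finally show "sum (funof n k x) {\<rho>\<in>msubsets n k. \<rho>' \<subseteq> \<rho>} = 0" .
qed

lemma Wm_vec:
  assumes xc: "x \<in> carrier_vec (length (subset_list n k))"
  shows "Wm n m k *\<^sub>v x = vec (length (subset_list n m)) (\<lambda>i. Wop n k (funof n k x) (subset_list n m ! i))"
proof (rule eq_vecI)
  let ?Lk = "subset_list n k" and ?Lm = "subset_list n m"
  have W: "Wm n m k \<in> carrier_mat (length ?Lm) (length ?Lk)" unfolding Wm_def by simp
  show "dim_vec (Wm n m k *\<^sub>v x) = dim_vec (vec (length ?Lm) (\<lambda>i. Wop n k (funof n k x) (?Lm ! i)))"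
    using W by simp
  fix i assume "i < dim_vec (vec (length ?Lm) (\<lambda>i. Wop n k (funof n k x) (?Lm ! i)))"
  hence i: "i < length ?Lm" by simp
  have "(Wm n m k *\<^sub>v x) $ i = (\<Sum>j<length ?Lk. (if ?Lk ! j \<subseteq> ?Lm ! i then 1 else 0) * x $ j)"
    using mat_vec_idx[OF W xc i] i by (simp add: Wm_def)
  also have "\<dots> = (\<Sum>\<rho>\<in>msubsets n k. if \<rho> \<subseteq> ?Lm ! i then funof n k x \<rho> else 0)"
    unfolding sum_msubsets_idx by (rule sum.cong[OF refl]) (simp add: funof_nth)
  also have "\<dots> = Wop n k (funof n k x) (?Lm ! i)"
    unfolding Wop_def by (rule sum.inter_filter[symmetric]) simp
  finally show "(Wm n m k *\<^sub>v x) $ i = vec (length ?Lm) (\<lambda>i. Wop n k (funof n k x) (?Lm ! i)) $ i" using i by simp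
qed

lemma Bmat_carrier: "Bmat n m b \<in> carrier_mat (length (subset_list n m)) (length (subset_list n m))"
  unfolding Bmat_def by simp

lemma Bmat_vec:
  "Bmat n m b *\<^sub>v vec (length (subset_list n m)) (\<lambda>i. v (subset_list n m ! i))
    = vec (length (subset_list n m)) (\<lambda>i. Bop n m b v (subset_list n m ! i))"
proof (rule eq_vecI)
  let ?L = "subset_list n m"
  show "dim_vec (Bmat n m b *\<^sub>v vec (length ?L) (\<lambda>i. v (?L ! i))) = dim_vec (vec (length ?L) (\<lambda>i. Bop n m b v (?L ! i)))"
    using Bmat_carrier[of n m b] by simp
  fix i assume "i < dim_vec (vec (length ?L) (\<lambda>i. Bop n m b v (?L ! i)))"
  hence i: "i < length ?L" by simp
  have "(Bmat n m b *\<^sub>v vec (length ?L) (\<lambda>i. v (?L ! i))) $ i = (\<Sum>j<length ?L. b (card (?L ! i \<inter> ?L ! j)) * v (?L ! j))"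
    using mat_vec_idx[OF Bmat_carrier _ i, of "vec (length ?L) (\<lambda>i. v (?L ! i))" b] i by (auto simp: Bmat_def intro!: sum.cong)
  also have "\<dots> = Bop n m b v (?L ! i)" unfolding Bop_def sum_msubsets_idx ..
  finally show "(Bmat n m b *\<^sub>v vec (length ?L) (\<lambda>i. v (?L ! i))) $ i = vec (length ?L) (\<lambda>i. Bop n m b v (?L ! i)) $ i"
    using i by simp
qed

lemma char_matrix_vec:
  assumes A: "A \<in> carrier_mat N N" and y: "y \<in> carrier_vec N"
  shows "char_matrix A e *\<^sub>v y = vec N (\<lambda>i. (A *\<^sub>v y) $ i - e * y $ i)"
proof (rule eq_vecI)
  show "dim_vec (char_matrix A e *\<^sub>v y) = dim_vec (vec N (\<lambda>i. (A *\<^sub>v y) $ i - e * y $ i))"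
    using char_matrix_closed[OF A, of e] by (simp add: carrier_matD)
  fix i assume "i < dim_vec (vec N (\<lambda>i. (A *\<^sub>v y) $ i - e * y $ i))"
  hence i: "i < N" by simp
  have CM: "char_matrix A e \<in> carrier_mat N N" using A by simp
  have "(char_matrix A e *\<^sub>v y) $ i = (\<Sum>j<N. (A $$ (i,j) + (if i = j then - e else 0)) * y $ j)"
    using mat_vec_idx[OF CM y i] A i by (auto simp: char_matrix_def intro!: sum.cong)
  also have "\<dots> = (\<Sum>j<N. A $$ (i,j) * y $ j + (if i = j then - e * y $ j else 0))"
    by (rule sum.cong) (auto simp: distrib_right)
  also have "\<dots> = (\<Sum>j<N. A $$ (i,j) * y $ j) + (\<Sum>j<N. (if i = j then - e * y $ j else 0))"
    by (rule sum.distrib)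
  also have "\<dots> = (A *\<^sub>v y) $ i - e * y $ i" using mat_vec_idx[OF A y i] i by simp
  finally show "(char_matrix A e *\<^sub>v y) $ i = vec N (\<lambda>i. (A *\<^sub>v y) $ i - e * y $ i) $ i" using i by simp
qed


lemma eig_dim:
  assumes km: "k \<le> m" "2 * m \<le> n"
  shows "(n choose k) - (if k = 0 then 0 else n choose (k-1)) \<le> kernel_dim (char_matrix (Bmat n m b) (lam n m k b))"
proof -
  let ?Lk = "subset_list n k" and ?Lm = "subset_list n m"
  let ?nr = "if k = 0 then 0 else length (subset_list n (k-1))"
  have D: "Dm n k \<in> carrier_mat ?nr (length ?Lk)" unfolding Dm_def by simp
  have W: "Wm n m k \<in> carrier_mat (length ?Lm) (length ?Lk)" unfolding Wm_def by simp
  have C: "char_matrix (Bmat n m b) (lam n m k b) \<in> carrier_mat (length ?Lm) (length ?Lm)"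
    using Bmat_carrier by simp
  have mk: "m + k \<le> n" using km by simp
  have "length ?Lk - ?nr \<le> kernel_dim (char_matrix (Bmat n m b) (lam n m k b))"
  proof (rule dim_transfer[OF D C W])
    fix x assume x: "x \<in> mat_kernel (Dm n k)"
    have xc: "x \<in> carrier_vec (length ?Lk)" using mat_kernelD(1)[OF D x] .
    have kd: "KD n k (funof n k x)" using KD_of_kernel[OF x] .
    let ?y = "vec (length ?Lm) (\<lambda>i. Wop n k (funof n k x) (?Lm ! i))"
    have Wx: "Wm n m k *\<^sub>v x = ?y" using Wm_vec[OF xc] .
    have yc: "?y \<in> carrier_vec (length ?Lm)" by simp
    show "char_matrix (Bmat n m b) (lam n m k b) *\<^sub>v (Wm n m k *\<^sub>v x) = 0\<^sub>v (length ?Lm)"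
      unfolding Wx char_matrix_vec[OF Bmat_carrier yc] Bmat_vec
      using eigen_W[OF kd km(1) mk subset_list_nth] by (intro eq_vecI) auto
  next
    fix x assume x: "x \<in> mat_kernel (Dm n k)" and W0: "Wm n m k *\<^sub>v x = 0\<^sub>v (length ?Lm)"
    have xc: "x \<in> carrier_vec (length ?Lk)" using mat_kernelD(1)[OF D x] .
    have kd: "KD n k (funof n k x)" using KD_of_kernel[OF x] .
    have "\<forall>\<sigma>\<in>msubsets n m. Wop n k (funof n k x) \<sigma> = 0"
    proof
      fix \<sigma> assume "\<sigma> \<in> msubsets n m"
      then obtain i where i: "i < length ?Lm" "?Lm ! i = \<sigma>" using msubsets_idx by blast
      have "(Wm n m k *\<^sub>v x) $ i = 0" using W0 i by simp
      thus "Wop n k (funof n k x) \<sigma> = 0" unfolding Wm_vec[OF xc] using i by simp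
    qed
    hence z: "\<And>\<rho>. \<rho> \<in> msubsets n k \<Longrightarrow> funof n k x \<rho> = 0" using W_inj[OF kd km] by blast
    show "x = 0\<^sub>v (length ?Lk)"
    proof (rule eq_vecI)
      fix j assume "j < dim_vec (0\<^sub>v (length ?Lk))"
      hence j: "j < length ?Lk" by simp
      have "x $ j = funof n k x (?Lk ! j)" using funof_nth[OF j] by simp
      also have "\<dots> = 0" using z subset_list_nth[OF j] by simp
      finally show "x $ j = 0\<^sub>v (length ?Lk) $ j" using j by simp
    qed (use xc in simp)
  qed
  thus ?thesis by (cases "k = 0") (simp_all add: len_subset_list)
qed



definition fdim :: "nat \<Rightarrow> nat \<Rightarrow> nat" where
  "fdim n k = (n choose k) - (if k = 0 then 0 else n choose (k-1))"

lemma binom_le: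
  assumes "Suc j \<le> n div 2"
  shows "n choose j \<le> n choose Suc j"
proof -
  have e: "Suc j * (n choose Suc j) = (n - j) * (n choose j)"
    using binomial_absorption[of j n] binomial_absorb_comp[of n j] by simp
  have "Suc j * (n choose j) \<le> (n - j) * (n choose j)" using assms by (intro mult_le_mono1) simp
  hence "Suc j * (n choose j) \<le> Suc j * (n choose Suc j)" using e by simp
  thus ?thesis by (subst (asm) Suc_mult_le_cancel1)
qed

lemma fdim_sum:
  assumes "m \<le> n div 2"
  shows "(\<Sum>j\<in>{0..m}. fdim n j) = n choose m"
  using assms
proof (induction m)
  case 0 thus ?case by (simp add: fdim_def)
next
  case (Suc m)
  have "(\<Sum>j\<in>{0..Suc m}. fdim n j) = (n choose m) + fdim n (Suc m)"
    using Suc by simp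
  also have "\<dots> = n choose Suc m" unfolding fdim_def using binom_le[OF Suc.prems] by simp
  finally show ?case .
qed

lemma fdim_real:
  assumes k: "k \<le> n div 2"
  shows "real (fdim n k) = fact n * (real n - 2 * real k + 1) / (fact k * fact (n - k + 1))"
proof (cases "k = 0")
  case True
  have f: "fact (n - k + 1) = (real n + 1) * fact n" using True by simp
  have nz: "(real n + 1) * fact n \<noteq> 0" by (simp add: add_pos_nonneg)
  have "fact n * (real n - 2 * real k + 1) = (real n + 1) * fact n" using True by simp
  hence "fact n * (real n - 2 * real k + 1) / (fact k * fact (n - k + 1)) = 1" using f nz True by simp
  thus ?thesis using True by (simp add: fdim_def)
next
  case False
  then obtain k' where k': "k = Suc k'" by (cases k) auto
  have kn: "k \<le> n" using k by simp
  have le: "n choose k' \<le> n choose k" using binom_le[of k' n] k k' by simp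
  have d: "real (fdim n k) = real (n choose k) - real (n choose k')" unfolding fdim_def using k' le by (simp add: of_nat_diff)
  have e: "n - k' = Suc (n - k)" using kn k' by simp
  have c1: "real (n choose k) = fact n / (real k * fact k' * fact (n - k))"
    using binomial_fact[OF kn, where 'a=real] unfolding k' by (simp add: mult.assoc)
  have c2: "real (n choose k') = fact n / (fact k' * ((real (n - k) + 1) * fact (n - k)))"
    using binomial_fact[of k' n, where 'a=real] kn k' unfolding e by (simp add: fact_Suc)
  have c3: "fact k * fact (n - k + 1) = real k * fact k' * ((real (n - k) + 1) * fact (n - k))"
    unfolding k' by (simp add: fact_Suc)
  have rk: "real (n - k) = real n - real k" using kn by (simp add: of_nat_diff)
  have nz: "real k \<noteq> 0" "(fact k' :: real) \<noteq> 0" "(fact (n - k) :: real) \<noteq> 0" "real (n - k) + 1 \<noteq> 0"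
    using k' by auto
  have aux: "\<And>F K A G r :: real. K \<noteq> 0 \<Longrightarrow> A \<noteq> 0 \<Longrightarrow> G \<noteq> 0 \<Longrightarrow> r + 1 \<noteq> 0 \<Longrightarrow>
      F / (K * A * G) - F / (A * ((r + 1) * G)) = F * ((r + K) - 2 * K + 1) / (K * A * ((r + 1) * G))"
  proof -
    fix F K A G r :: real
    assume h: "K \<noteq> 0" "A \<noteq> 0" "G \<noteq> 0" "r + 1 \<noteq> 0"
    have D: "K * A * ((r + 1) * G) \<noteq> 0" using h by simp
    have e1: "K * A * ((r + 1) * G) = (r + 1) * (K * A * G)" "F * (r + 1) = (r + 1) * F" by (simp_all add: algebra_simps)
    have 1: "F / (K * A * G) = F * (r + 1) / (K * A * ((r + 1) * G))"
      unfolding e1 by (rule mult_divide_mult_cancel_left[OF h(4), symmetric])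
    have e2: "K * A * ((r + 1) * G) = K * (A * ((r + 1) * G))" "F * K = K * F" by (simp_all add: algebra_simps)
    have 2: "F / (A * ((r + 1) * G)) = F * K / (K * A * ((r + 1) * G))"
      unfolding e2 by (rule mult_divide_mult_cancel_left[OF h(1), symmetric])
    have 3: "F * (r + 1) - F * K = F * ((r + K) - 2 * K + 1)" by (simp add: algebra_simps)
    show "F / (K * A * G) - F / (A * ((r + 1) * G)) = F * ((r + K) - 2 * K + 1) / (K * A * ((r + 1) * G))"
      unfolding 1 2 diff_divide_distrib[symmetric] 3 ..
  qed
  have rn: "real n = real (n - k) + real k" using rk by simp
  show ?thesis unfolding d c1 c2 c3 rn using aux[OF nz] by simp
qed

lemma mult_eq:
  assumes m: "m \<le> n div 2" and km: "k \<le> m" and inj: "inj_on (\<lambda>j. lam n m j b) {0..m}"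
  shows "eig_mult (Bmat n m b) (lam n m k b) = fdim n k"
proof -
  let ?B = "Bmat n m b"
  let ?o = "\<lambda>j. Polynomial.order (lam n m j b) (char_poly ?B)"
  have m2: "2 * m \<le> n" using m by simp
  have ge: "fdim n j \<le> ?o j" if "j \<in> {0..m}" for j
  proof -
    have "fdim n j \<le> kernel_dim (char_matrix ?B (lam n m j b))" unfolding fdim_def
      using eig_dim[of j m n b] that m2 by simp
    also have "\<dots> \<le> ?o j" by (rule geo_le_alg[OF Bmat_carrier])
    finally show ?thesis .
  qed
  have so: "(\<Sum>j\<in>{0..m}. ?o j) \<le> n choose m"
    using sum_orders_le[OF Bmat_carrier inj] by (simp add: len_subset_list)
  have sf: "(\<Sum>j\<in>{0..m}. fdim n j) = n choose m" by (rule fdim_sum[OF m])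
  have kin: "k \<in> {0..m}" using km by simp
  have "(\<Sum>j\<in>{0..m}. ?o j) = ?o k + (\<Sum>j\<in>{0..m}-{k}. ?o j)" by (rule sum.remove[OF _ kin]) simp
  moreover have "(\<Sum>j\<in>{0..m}. fdim n j) = fdim n k + (\<Sum>j\<in>{0..m}-{k}. fdim n j)" by (rule sum.remove[OF _ kin]) simp
  moreover have "(\<Sum>j\<in>{0..m}-{k}. fdim n j) \<le> (\<Sum>j\<in>{0..m}-{k}. ?o j)" by (rule sum_mono) (use ge in auto)
  ultimately have "?o k \<le> fdim n k" using so sf by linarith
  moreover have "fdim n k \<le> ?o k" using ge kin by blast
  ultimately show ?thesis unfolding eig_mult_def by simp
qed



lemma polyfun_sum:
  assumes "finite I" "\<And>i. i \<in> I \<Longrightarrow> f i \<in> polyfun m"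
  shows "(\<lambda>b. \<Sum>i\<in>I. f i b) \<in> polyfun m"
  using assms
proof (induction I rule: finite_induct)
  case empty
  show ?case using pconst[of 0 m] by simp
next
  case (insert x F)
  have e: "(\<lambda>b. \<Sum>i\<in>insert x F. f i b) = (\<lambda>b. f x b + (\<Sum>i\<in>F. f i b))"
    using insert(1,2) by (simp add: fun_eq_iff)
  have "f x \<in> polyfun m" using insert by simp
  hence "(\<lambda>b. f x b) \<in> polyfun m" by simp
  thus ?case unfolding e using insert by (intro padd) auto
qed

lemma polyfun_prod:
  assumes "finite I" "\<And>i. i \<in> I \<Longrightarrow> f i \<in> polyfun m"
  shows "(\<lambda>b. \<Prod>i\<in>I. f i b) \<in> polyfun m"
  using assms
proof (induction I rule: finite_induct)
  case empty
  show ?case using pconst[of 1 m] by simp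
next
  case (insert x F)
  have e: "(\<lambda>b. \<Prod>i\<in>insert x F. f i b) = (\<lambda>b. f x b * (\<Prod>i\<in>F. f i b))"
    using insert(1,2) by (simp add: fun_eq_iff)
  have "f x \<in> polyfun m" using insert by simp
  hence "(\<lambda>b. f x b) \<in> polyfun m" by simp
  thus ?case unfolding e using insert by (intro pmult) auto
qed

lemma polyfun_diff:
  assumes "P \<in> polyfun m" "Q \<in> polyfun m"
  shows "(\<lambda>b. P b - Q b) \<in> polyfun m"
proof -
  have "(\<lambda>b. P b + (\<lambda>b. -1) b * Q b) \<in> polyfun m"
    using assms by (intro padd pmult pconst) auto
  thus ?thesis by simp
qed

lemma lam_polyfun:
  assumes "k \<le> m"
  shows "lam n m k \<in> polyfun m"
proof -
  have e: "lam n m k = (\<lambda>b. \<Sum>j=0..k. \<Sum>p=0..m-k. (-1) ^ (k - j) * of_nat (k choose j)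
      * of_nat ((m - j) choose p) * of_nat ((n - m - k + j) choose (m - k - p)) * b (j + p))"
    by (simp add: fun_eq_iff lam_def)
  show ?thesis unfolding e
  proof (intro polyfun_sum)
    fix j p assume j: "j \<in> {0..k}" and p: "p \<in> {0..m-k}"
    have "j + p \<le> m" using j p assms by auto
    thus "(\<lambda>b. (-1) ^ (k - j) * of_nat (k choose j) * of_nat ((m - j) choose p)
        * of_nat ((n - m - k + j) choose (m - k - p)) * b (j + p)) \<in> polyfun m"
      by (intro pmult pconst pvar)
  qed auto
qed

definition Pf :: "nat \<Rightarrow> nat \<Rightarrow> (nat \<Rightarrow> complex) \<Rightarrow> complex" where
  "Pf n m b = (\<Prod>i\<in>{0..m}. \<Prod>j\<in>{0..m}-{i}. lam n m i b - lam n m j b)"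

lemma Pf_polyfun: "Pf n m \<in> polyfun m"
proof -
  have e: "Pf n m = (\<lambda>b. \<Prod>i\<in>{0..m}. \<Prod>j\<in>{0..m}-{i}. lam n m i b - lam n m j b)"
    by (simp add: fun_eq_iff Pf_def)
  show ?thesis unfolding e
    by (intro polyfun_prod polyfun_diff lam_polyfun) auto
qed

lemma Pf_inj: "Pf n m b \<noteq> 0 \<longleftrightarrow> inj_on (\<lambda>j. lam n m j b) {0..m}"
proof
  assume P: "Pf n m b \<noteq> 0"
  have h: "\<forall>i\<in>{0..m}. \<forall>j\<in>{0..m}-{i}. lam n m i b - lam n m j b \<noteq> 0"
    using P unfolding Pf_def by (simp add: prod_zero_iff)
  show "inj_on (\<lambda>j. lam n m j b) {0..m}"
  proof (rule inj_onI, rule ccontr)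
    fix i j assume ij: "i \<in> {0..m}" "j \<in> {0..m}" "lam n m i b = lam n m j b" "i \<noteq> j"
    have "lam n m i b - lam n m j b \<noteq> 0" using h ij(1,2,4) by blast
    thus False using ij(3) by simp
  qed
next
  assume inj: "inj_on (\<lambda>j. lam n m j b) {0..m}"
  have d: "lam n m i b - lam n m j b \<noteq> 0" if "i \<in> {0..m}" "j \<in> {0..m}-{i}" for i j
    using inj that by (auto dest: inj_onD)
  have "(\<Prod>j\<in>{0..m}-{i}. lam n m i b - lam n m j b) \<noteq> 0" if "i \<in> {0..m}" for i
    using d[OF that] by (subst prod_zero_iff) auto
  thus "Pf n m b \<noteq> 0" unfolding Pf_def by (subst prod_zero_iff) auto
qed



definition bs :: "nat \<Rightarrow> nat \<Rightarrow> complex" where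
  "bs m s = (if s = m - 1 then 1 else 0)"

lemma Gf_bs:
  assumes m: "1 \<le> m"
  shows "Gf n m j (bs m) i = (if i \<le> m - 1 \<and> m - 1 - i \<le> m - j
     then of_nat ((m - i) choose (m - 1 - i)) * of_nat ((n - m - j + i) choose (m - j - (m - 1 - i))) else 0)"
proof -
  let ?F = "\<lambda>p. of_nat ((m - i) choose p) * of_nat ((n - m - j + i) choose (m - j - p)) :: complex"
  have "Gf n m j (bs m) i = (\<Sum>p\<in>{0..m-j}. if p = m - 1 - i then (if i \<le> m - 1 then ?F p else 0) else 0)"
    unfolding Gf_def
  proof (rule sum.cong[OF refl])
    fix p
    have "(i + p = m - 1) \<longleftrightarrow> (p = m - 1 - i \<and> i \<le> m - 1)" using m by auto
    thus "?F p * bs m (i + p) = (if p = m - 1 - i then (if i \<le> m - 1 then ?F p else 0) else 0)"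
      unfolding bs_def by auto
  qed
  also have "\<dots> = (if m - 1 - i \<in> {0..m-j} then (if i \<le> m - 1 then ?F (m - 1 - i) else 0) else 0)"
    by (rule sum.delta) simp
  finally show ?thesis by auto
qed

lemma lam_bs:
  assumes m: "1 \<le> m" and j: "j \<le> m" and n: "2 * m \<le> n"
  shows "lam n m j (bs m) = of_int (int (m - j) * int (n - m - j) - int j)"
proof (cases "j = 0")
  case True
  have "lam n m j (bs m) = Gf n m 0 (bs m) 0" unfolding lam_Gf using True by simp
  also have "\<dots> = of_nat (m choose (m - 1)) * of_nat ((n - m) choose 1)"
    unfolding Gf_bs[OF m] using m by simp
  also have "m choose (m - 1) = m" using binomial_symmetric[of "m-1" m] m by simp
  finally show ?thesis using True by simp
next
  case False
  let ?h = "\<lambda>i. (-1) ^ (j - i) * of_nat (j choose i) * Gf n m j (bs m) i :: complex"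
  have "lam n m j (bs m) = (\<Sum>i\<in>{0..j}. ?h i)" unfolding lam_Gf ..
  also have "\<dots> = (\<Sum>i\<in>{j-1, j}. ?h i)"
  proof (rule sum.mono_neutral_right)
    show "\<forall>i\<in>{0..j} - {j-1, j}. ?h i = 0"
    proof
      fix i assume "i \<in> {0..j} - {j-1, j}"
      hence "i + 1 < j" by auto
      hence "\<not> (m - 1 - i \<le> m - j)" using j by auto
      thus "?h i = 0" unfolding Gf_bs[OF m] by simp
    qed
  qed auto
  also have "\<dots> = ?h (j-1) + ?h j" using False by simp
  also have "?h (j-1) = - (of_nat j * of_nat (m - j + 1))"
  proof -
    have e1: "j - (j - 1) = 1" using False by simp
    have e1': "j choose (j - 1) = j" using binomial_symmetric[of "j-1" j] False by simp
    have e2: "j - 1 \<le> m - 1" "m - 1 - (j - 1) \<le> m - j" using j False by auto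
    have e3: "m - (j - 1) = Suc (m - j)" "m - 1 - (j - 1) = m - j" "m - j - (m - 1 - (j - 1)) = 0"
      using j False by auto
    show ?thesis unfolding Gf_bs[OF m] using e1 e1' e2 e3 by (simp add: binomial_Suc_n)
  qed
  also have "?h j = (if j < m then of_nat (m - j) * of_nat (n - m) else 0)"
  proof (cases "j < m")
    case True
    have e3: "m - j = Suc (m - 1 - j)" "m - j - (m - 1 - j) = 1" "n - m - j + j = n - m" using True j n by auto
    show ?thesis unfolding Gf_bs[OF m] using True e3 by (simp add: binomial_Suc_n)
  next
    case False
    thus ?thesis unfolding Gf_bs[OF m] using j m by simp
  qed
  finally have L: "lam n m j (bs m) = - (of_nat j * of_nat (m - j + 1)) + (if j < m then of_nat (m - j) * of_nat (n - m) else 0)" .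
  show ?thesis
  proof (cases "j < m")
    case True
    have "int (m - j) * int (n - m - j) - int j = - (int j * int (m - j + 1)) + int (m - j) * int (n - m)"
      using True j n by (simp add: of_nat_diff algebra_simps)
    hence "(of_int (int (m - j) * int (n - m - j) - int j) :: complex)
        = of_int (- (int j * int (m - j + 1)) + int (m - j) * int (n - m))" by simp
    thus ?thesis unfolding L using True by simp
  next
    case False
    hence "j = m" using j by simp
    thus ?thesis unfolding L by simp
  qed
qed

lemma bs_inj:
  assumes n: "2 * m \<le> n"
  shows "inj_on (\<lambda>j. lam n m j (bs m)) {0..m}"
proof (cases "m = 0")
  case True thus ?thesis by simp
next
  case False
  hence m: "1 \<le> m" by simp
  let ?t = "\<lambda>j. int (m - j) * int (n - m - j) - int j"
  have dec: "?t j < ?t i" if "i < j" "j \<le> m" for i j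
  proof -
    have a: "int (m - j) = int m - int j" "int (n - m - j) = int n - int m - int j"
      "int (m - i) = int m - int i" "int (n - m - i) = int n - int m - int i" using that n by auto
    have "?t i - ?t j = (int j - int i) * (int n - int i - int j + 1)" unfolding a by (simp add: algebra_simps)
    moreover have "int j - int i > 0" "int n - int i - int j + 1 > 0" using that n by auto
    ultimately show ?thesis by (metis diff_gt_0_iff_gt mult_pos_pos)
  qed
  show ?thesis
  proof (rule inj_onI)
    fix i j assume ij: "i \<in> {0..m}" "j \<in> {0..m}" "lam n m i (bs m) = lam n m j (bs m)"
    hence "(of_int (?t i) :: complex) = of_int (?t j)" using lam_bs[OF m _ n] by simp
    hence e: "?t i = ?t j" by (simp only: of_int_eq_iff)
    show "i = j"
    proof (rule ccontr)
      assume "i \<noteq> j"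
      hence "i < j \<or> j < i" by auto
      thus False using dec ij e by (metis atLeastAtMost_iff less_irrefl)
    qed
  qed
qed



theorem theorem1:
  fixes n m k :: nat
  assumes "n > 0" and "m \<le> n div 2" and "k \<le> m"
  shows "(\<forall>b. (\<exists>\<sigma>\<in>msubsets n m. pi_ck n m k \<sigma> \<noteq> 0) \<and>
            (\<forall>\<sigma>\<in>msubsets n m. Bop n m b (pi_ck n m k) \<sigma> = lam n m k b * pi_ck n m k \<sigma>))
       \<and> (\<exists>P\<in>polyfun m. (\<exists>b. P b \<noteq> 0) \<and>
            (\<forall>b. P b \<noteq> 0 \<longrightarrow>
               real (eig_mult (Bmat n m b) (lam n m k b))
                 = fact n * (real n - 2 * real k + 1) / (fact k * fact (n - k + 1))))"
proof -
  have m2: "2 * m \<le> n" using assms(2) by simp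
  have P1: "\<forall>b. (\<exists>\<sigma>\<in>msubsets n m. pi_ck n m k \<sigma> \<noteq> 0) \<and>
            (\<forall>\<sigma>\<in>msubsets n m. Bop n m b (pi_ck n m k) \<sigma> = lam n m k b * pi_ck n m k \<sigma>)"
    using part1[OF assms] by blast
  have P2: "\<exists>P\<in>polyfun m. (\<exists>b. P b \<noteq> 0) \<and>
            (\<forall>b. P b \<noteq> 0 \<longrightarrow>
               real (eig_mult (Bmat n m b) (lam n m k b))
                 = fact n * (real n - 2 * real k + 1) / (fact k * fact (n - k + 1)))"
  proof (rule bexI[of _ "Pf n m"])
    show "Pf n m \<in> polyfun m" by (rule Pf_polyfun)
    have ex: "\<exists>b. Pf n m b \<noteq> 0" using bs_inj[OF m2] Pf_inj by blast
    have all: "\<forall>b. Pf n m b \<noteq> 0 \<longrightarrow>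
               real (eig_mult (Bmat n m b) (lam n m k b))
                 = fact n * (real n - 2 * real k + 1) / (fact k * fact (n - k + 1))"
    proof (intro allI impI)
      fix b assume "Pf n m b \<noteq> 0"
      hence inj: "inj_on (\<lambda>j. lam n m j b) {0..m}" using Pf_inj by blast
      have "eig_mult (Bmat n m b) (lam n m k b) = fdim n k" by (rule mult_eq[OF assms(2,3) inj])
      moreover have "k \<le> n div 2" using assms(2,3) by simp
      ultimately show "real (eig_mult (Bmat n m b) (lam n m k b))
                 = fact n * (real n - 2 * real k + 1) / (fact k * fact (n - k + 1))"
        using fdim_real by simp
    qed
    show "(\<exists>b. Pf n m b \<noteq> 0) \<and> (\<forall>b. Pf n m b \<noteq> 0 \<longrightarrow>
               real (eig_mult (Bmat n m b) (lam n m k b))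
                 = fact n * (real n - 2 * real k + 1) / (fact k * fact (n - k + 1)))"
      using ex all by blast
  qed
  show ?thesis using P1 P2 by blast
qed

end
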